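(* Let $N,s,h$ be natural numbers with $s\ge\underline{s}:=h+\max(m_{sum},m_{lb})-1$, $N_{lb}\mid N$ and $L_{sb}\mid h$. Assume $N,s,h,m_{sum},m_{lb},N_{lb},L_{sb},K_{sb}$, the sets $\alpha_{sb}(0),\ldots,\alpha_{sb}(K_{sb})$, the function $f_{sb}$ and the bounded functions $f_{sum},f_{lb}$ are fixed. Let, for every $n$, $\varepsilon_1,\ldots,\varepsilon_n$ have a joint distribution (series scheme) such that for all $1\le i\le N$, $0\le j\le K_{sb}+2$, $$\frac{1}{\sqrt{n}}\mathcal{X}^{(N,s,h)}_i(j)\xrightarrow{\mathbf{P}}x_i(j),\quad n\to\infty,$$ for some real numbers $x_i(j)$. For $1\le k\le N_{lb}$, $0\le j\le K_{sb}+2$ put $y_k(j)=\sum_{i=1}^{N/N_{lb}}x_{\frac{N}{N_{lb}}(k-1)+i}(j)$, and $$c_{sum}=\sum_{k=1}^{N_{lb}}y_k(K_{sb}+2),\quad c_{lb}=\sum_{k=1}^{N_{lb}}(y_k(K_{sb}+1))^2,\quad c_{sb}=\sum_{j=0}^{K_{sb}}\Big(\sum_{k=1}^{N_{lb}}y_k(j)\Big)^2.$$ If $c_{sum}\ne0$, then $T_{sum}\xrightarrow{\mathbf{P}}\mathrm{sgn}(c_{sum})\cdot(+\infty)$ as $n\to\infty$. If $c_{lb}\ne0$, then $T_{lb}\xrightarrow{\mathbf{P}}+\infty$. If $c_{sb}\ne0$, then $T_{sb}\xrightarrow{\mathbf{P}}+\infty$.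
   Context: Let $\mathfrak{X}\subset\mathbb{R}^d$ (Borel $\sigma$-algebra) and $\mathbf{P}_0$ a fixed distribution on $\mathfrak{X}$; under $H_0$ the $\varepsilon_i$ are i.i.d. with law $\mathbf{P}_0$, and $\mathbf{E}_{H_0},\mathbf{D}_{H_0},\mathrm{cov}_{H_0},\mathbf{P}_{H_0}$ are computed under $H_0$ (these define the constants below, while probabilities in the claim refer to the given series scheme). $[x]$ is the integer part. Fix natural numbers $m_{sum},m_{lb},N_{lb},L_{sb},K_{sb}$, measurable $f_{sum}:\mathfrak{X}^{m_{sum}}\to\mathbb{R}$, $f_{lb}:\mathfrak{X}^{m_{lb}}\to\mathbb{R}$, $f_{sb}:\mathfrak{X}^{L_{sb}}\to\mathbb{R}$, and a partition of $f_{sb}(\mathfrak{X}^{L_{sb}})$ into nonempty disjoint measurable sets $\alpha_{sb}(0),\ldots,\alpha_{sb}(K_{sb})$. $E_{sum}=\mathbf{E}_{H_0}f_{sum}(\varepsilon_1,\ldots,\varepsilon_{m_{sum}})$, $\sigma^2_{sum}=\mathbf{D}_{H_0}f_{sum}(\varepsilon_1,\ldots,\varepsilon_{m_{sum}})+2\sum_{i=2}^{m_{sum}}\mathrm{cov}_{H_0}(f_{sum}(\varepsilon_i,\ldots,\varepsilon_{i+m_{sum}-1}),f_{sum}(\varepsilon_1,\ldots,\varepsilon_{m_{sum}}))$, $\sigma_{sum}\ge0$, $T_{sum}=\frac{\sum_{i=1}^{n-m_{sum}+1}(f_{sum}(\varepsilon_i,\ldots,\varepsilon_{i+m_{sum}-1})-E_{sum})}{\sigma_{sum}\sqrt{n-m_{sum}+1}}$.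 $L_{lb}=[n/N_{lb}]$, $W_k=\sum_{j=L_{lb}(k-1)+1}^{L_{lb}k-m_{lb}+1}f_{lb}(\varepsilon_j,\ldots,\varepsilon_{j+m_{lb}-1})$, $E_{lb},\sigma_{lb}$ defined from $f_{lb},m_{lb}$ as $E_{sum},\sigma_{sum}$, $T_{lb}=\sum_{k=1}^{N_{lb}}\frac{(W_k-(L_{lb}-m_{lb}+1)E_{lb})^2}{L_{lb}\sigma_{lb}^2}$. $N_{sb}=[n/L_{sb}]$, $w(j)=\sum_{i=1}^{N_{sb}}I\{f_{sb}(\varepsilon_{L_{sb}(i-1)+1},\ldots,\varepsilon_{L_{sb}i})\in\alpha_{sb}(j)\}$, $E_{sb}(j)=\mathbf{P}_{H_0}(f_{sb}(\varepsilon_1,\ldots,\varepsilon_{L_{sb}})\in\alpha_{sb}(j))$, $T_{sb}=\sum_{j=0}^{K_{sb}}\frac{(w(j)-N_{sb}E_{sb}(j))^2}{N_{sb}E_{sb}(j)}$. Standing assumption: $\sigma_{sum},\sigma_{lb}\in(0,\infty)$, all $E_{sb}(j)>0$. $L=[n/N]$. For $\theta\in\mathfrak{X}^s$: $f^{(s)}_j(\theta)=E_{sb}(j)^{-1/2}\sum_{u=1}^{h/L_{sb}}I\{f_{sb}(\theta_{L_{sb}(u-1)+1},\ldots,\theta_{L_{sb}u})\in\alpha_{sb}(j)\}$ ($0\le j\le K_{sb}$), $f^{(s)}_{K_{sb}+1}(\theta)=\sigma_{lb}^{-1}\sum_{u=1}^hf_{lb}(\theta_u,\ldots,\theta_{u+m_{lb}-1})$,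 $f^{(s)}_{K_{sb}+2}(\theta)=\sigma_{sum}^{-1}\sum_{u=1}^hf_{sum}(\theta_u,\ldots,\theta_{u+m_{sum}-1})$. For $1\le i\le N$: $\mathcal{X}^{(N,s,h)}_i(j)=n^{-1/2}\sum_{t\in\mathbb{Z}:\ L(i-1)/h\le t\le(Li-s)/h}\big(f^{(s)}_j(\varepsilon_{ht+1},\ldots,\varepsilon_{ht+s})-\mathbf{E}_{H_0}f^{(s)}_j(\varepsilon_1,\ldots,\varepsilon_s)\big)$. *)

theory Defs
  imports "HOL-Probability.Probability"
begin

text \<open>Fixed parameters of the three tests.  A function of m arguments
 f(x_1,...,x_m) is represented as a function on nat => 'a, applied to
 the restricted window (indices 0..m-1).\<close>

record 'a cfg =
  P0 :: "'a measure"
  msum :: nat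
  fsum :: "(nat \<Rightarrow> 'a) \<Rightarrow> real"
  mlb :: nat
  flb :: "(nat \<Rightarrow> 'a) \<Rightarrow> real"
  Nlb :: nat
  Lsb :: nat
  Ksb :: nat
  fsb :: "(nat \<Rightarrow> 'a) \<Rightarrow> real"
  alpha :: "nat \<Rightarrow> real set"

definition win :: "(nat \<Rightarrow> 'a) \<Rightarrow> nat \<Rightarrow> nat \<Rightarrow> (nat \<Rightarrow> 'a)" where
  "win e a m = restrict (\<lambda>k. e (a + k)) {..<m}"

definition H0 :: "'a measure \<Rightarrow> (nat \<Rightarrow> 'a) measure" where
  "H0 P = PiM UNIV (\<lambda>_. P)"

definition EH0 :: "'a measure \<Rightarrow> ((nat \<Rightarrow> 'a) \<Rightarrow> real) \<Rightarrow> real" where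
  "EH0 P g = integral\<^sup>L (H0 P) g"

definition covH0 :: "'a measure \<Rightarrow> ((nat \<Rightarrow> 'a) \<Rightarrow> real) \<Rightarrow> ((nat \<Rightarrow> 'a) \<Rightarrow> real) \<Rightarrow> real" where
  "covH0 P g1 g2 = EH0 P (\<lambda>w. g1 w * g2 w) - EH0 P g1 * EH0 P g2"

definition Emean :: "'a measure \<Rightarrow> ((nat \<Rightarrow> 'a) \<Rightarrow> real) \<Rightarrow> nat \<Rightarrow> real" where
  "Emean P f m = EH0 P (\<lambda>w. f (win w 1 m))"

definition sigma2 :: "'a measure \<Rightarrow> ((nat \<Rightarrow> 'a) \<Rightarrow> real) \<Rightarrow> nat \<Rightarrow> real" where
  "sigma2 P f m = covH0 P (\<lambda>w. f (win w 1 m)) (\<lambda>w. f (win w 1 m))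
     + 2 * (\<Sum>i=2..m. covH0 P (\<lambda>w. f (win w i m)) (\<lambda>w. f (win w 1 m)))"

definition sigma :: "'a measure \<Rightarrow> ((nat \<Rightarrow> 'a) \<Rightarrow> real) \<Rightarrow> nat \<Rightarrow> real" where
  "sigma P f m = sqrt (sigma2 P f m)"

definition Esb :: "'a cfg \<Rightarrow> nat \<Rightarrow> real" where
  "Esb C j = measure (H0 (P0 C))
     {w \<in> space (H0 (P0 C)). fsb C (win w 1 (Lsb C)) \<in> alpha C j}"

text \<open>The statistics, evaluated at a sample e (eps_i = e i, 1 <= i <= n).\<close>
definition Tsum :: "'a cfg \<Rightarrow> nat \<Rightarrow> (nat \<Rightarrow> 'a) \<Rightarrow> real" where
  "Tsum C n e = (\<Sum>i=1..n + 1 - msum C. fsum C (win e i (msum C)) - Emean (P0 C) (fsum C) (msum C))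
      / (sigma (P0 C) (fsum C) (msum C) * sqrt (real (n + 1 - msum C)))"

definition Wlb :: "'a cfg \<Rightarrow> nat \<Rightarrow> (nat \<Rightarrow> 'a) \<Rightarrow> nat \<Rightarrow> real" where
  "Wlb C n e k = (let L = n div Nlb C in
     (\<Sum>j = L * (k - 1) + 1 .. L * k + 1 - mlb C. flb C (win e j (mlb C))))"

definition Tlb :: "'a cfg \<Rightarrow> nat \<Rightarrow> (nat \<Rightarrow> 'a) \<Rightarrow> real" where
  "Tlb C n e = (let L = n div Nlb C in
     (\<Sum>k=1..Nlb C. (Wlb C n e k - (real L - real (mlb C) + 1) * Emean (P0 C) (flb C) (mlb C))\<^sup>2
        / (real L * (sigma (P0 C) (flb C) (mlb C))\<^sup>2)))"

definition wsb :: "'a cfg \<Rightarrow> nat \<Rightarrow> (nat \<Rightarrow> 'a) \<Rightarrow> nat \<Rightarrow> nat" where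
  "wsb C n e j = card {i \<in> {1..n div Lsb C}.
      fsb C (win e (Lsb C * (i - 1) + 1) (Lsb C)) \<in> alpha C j}"

definition Tsb :: "'a cfg \<Rightarrow> nat \<Rightarrow> (nat \<Rightarrow> 'a) \<Rightarrow> real" where
  "Tsb C n e = (let Nsb = n div Lsb C in
     (\<Sum>j=0..Ksb C. (real (wsb C n e j) - real Nsb * Esb C j)\<^sup>2 / (real Nsb * Esb C j)))"

text \<open>f^{(s)}_j(theta), theta = (theta_1, ..., theta_s) given as theta k, 1 <= k <= s.\<close>
definition fs :: "'a cfg \<Rightarrow> nat \<Rightarrow> nat \<Rightarrow> (nat \<Rightarrow> 'a) \<Rightarrow> real" where
  "fs C h j \<theta> =
    (if j \<le> Ksb C then
       (\<Sum>u=1..h div Lsb C. if fsb C (win \<theta> (Lsb C * (u - 1) + 1) (Lsb C)) \<in> alpha C j then 1 else 0)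
         / sqrt (Esb C j)
     else if j = Ksb C + 1 then (\<Sum>u=1..h. flb C (win \<theta> u (mlb C))) / sigma (P0 C) (flb C) (mlb C)
     else (\<Sum>u=1..h. fsum C (win \<theta> u (msum C))) / sigma (P0 C) (fsum C) (msum C))"

definition Xcal :: "'a cfg \<Rightarrow> nat \<Rightarrow> nat \<Rightarrow> nat \<Rightarrow> nat \<Rightarrow> nat \<Rightarrow> nat \<Rightarrow> (nat \<Rightarrow> 'a) \<Rightarrow> real" where
  "Xcal C N s h n i j e = (let L = n div N in
     (\<Sum>t \<in> {t::nat. L * (i - 1) \<le> h * t \<and> h * t + s \<le> L * i}.
         fs C h j (\<lambda>k. e (h * t + k)) - EH0 (P0 C) (fs C h j)) / sqrt (real n))"

definition cvg_prob :: "(nat \<Rightarrow> 'b measure) \<Rightarrow> (nat \<Rightarrow> 'b \<Rightarrow> real) \<Rightarrow> real \<Rightarrow> bool" where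
  "cvg_prob M Y c \<longleftrightarrow> (\<forall>\<delta>>0. (\<lambda>n. measure (M n) {w \<in> space (M n). \<bar>Y n w - c\<bar> > \<delta>}) \<longlonglongrightarrow> 0)"

definition cvg_prob_pinf :: "(nat \<Rightarrow> 'b measure) \<Rightarrow> (nat \<Rightarrow> 'b \<Rightarrow> real) \<Rightarrow> bool" where
  "cvg_prob_pinf M Y \<longleftrightarrow> (\<forall>B. (\<lambda>n. measure (M n) {w \<in> space (M n). Y n w \<le> B}) \<longlonglongrightarrow> 0)"

definition cvg_prob_minf :: "(nat \<Rightarrow> 'b measure) \<Rightarrow> (nat \<Rightarrow> 'b \<Rightarrow> real) \<Rightarrow> bool" where
  "cvg_prob_minf M Y \<longleftrightarrow> (\<forall>B. (\<lambda>n. measure (M n) {w \<in> space (M n). Y n w \<ge> B}) \<longlonglongrightarrow> 0)"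

end

theory Submission
  imports Defs
begin

definition Tset :: "nat \<Rightarrow> nat \<Rightarrow> nat \<Rightarrow> nat \<Rightarrow> nat set" where
  "Tset L h s i = {t. L*(i-1) \<le> h*t \<and> h*t + s \<le> L*i}"

definition TG :: "nat \<Rightarrow> nat \<Rightarrow> nat \<Rightarrow> nat \<Rightarrow> nat \<Rightarrow> nat set" where
  "TG L h s g1 g2 = (\<Union>i\<in>{g1<..g2}. Tset L h s i)"

definition QG :: "nat \<Rightarrow> nat \<Rightarrow> nat \<Rightarrow> nat \<Rightarrow> nat \<Rightarrow> nat \<Rightarrow> nat set" where
  "QG L h s d g1 g2 = (\<lambda>(t,u). (h div d)*t + u) ` (TG L h s g1 g2 \<times> {1..h div d})"

definition Eset :: "nat \<Rightarrow> nat \<Rightarrow> nat \<Rightarrow> nat \<Rightarrow> nat set" where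
  "Eset L N d c = {q. \<exists>i\<le>N. L*i \<le> d*q + c \<and> d*q \<le> L*i + c}"

lemma finite_Tset: "0 < h \<Longrightarrow> finite (Tset L h s i)"
proof -
  assume h: "0 < h"
  have "Tset L h s i \<subseteq> {..L*i}"
  proof
    fix t assume "t \<in> Tset L h s i"
    then have "h*t \<le> L*i" by (auto simp: Tset_def)
    moreover have "t \<le> h*t" using h by simp
    ultimately show "t \<in> {..L*i}" by (meson atMost_iff le_trans)
  qed
  then show ?thesis using finite_subset by blast
qed

lemma finite_TG: "0 < h \<Longrightarrow> finite (TG L h s g1 g2)"
  by (simp add: TG_def finite_Tset)

lemma Tset_disjoint:
  assumes "0 < s" "i \<noteq> i'"
  shows "Tset L h s i \<inter> Tset L h s i' = {}"
proof (rule ccontr)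
  assume "Tset L h s i \<inter> Tset L h s i' \<noteq> {}"
  then obtain t where t: "L*(i-1) \<le> h*t" "h*t + s \<le> L*i" "L*(i'-1) \<le> h*t" "h*t + s \<le> L*i'"
    by (auto simp: Tset_def)
  show False
  proof (cases "i < i'")
    case True
    then have "i \<le> i' - 1" by simp
    then have "L*i \<le> L*(i'-1)" by simp
    then show False using t assms by linarith
  next
    case False
    then have "i' \<le> i - 1" using assms by simp
    then have "L*i' \<le> L*(i-1)" by simp
    then show False using t assms by linarith
  qed
qed

lemma finite_Eset: assumes "0 < d" shows "finite (Eset L N d c)"
proof -
  have "Eset L N d c \<subseteq> {..L*N + c}"
  proof
    fix q assume "q \<in> Eset L N d c"
    then obtain i where "i \<le> N" "d*q \<le> L*i + c" by (auto simp: Eset_def)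
    moreover have "L*i \<le> L*N" using \<open>i \<le> N\<close> by simp
    moreover have "q \<le> d*q" using assms by simp
    ultimately have "q \<le> L*N+c" by linarith
    then show "q \<in> {..L*N+c}" by simp
  qed
  then show ?thesis using finite_subset by blast
qed

lemma card_Eset: assumes "0 < d" shows "card (Eset L N d c) \<le> (N+1)*(2*c+1)"
proof -
  have eq: "Eset L N d c = (\<Union>i\<in>{..N}. {q. L*i \<le> d*q + c \<and> d*q \<le> L*i + c})"
    by (auto simp: Eset_def)
  have ci: "card {q. L*i \<le> d*q + c \<and> d*q \<le> L*i + c} \<le> 2*c+1" for i
  proof -
    let ?A = "{q. L*i \<le> d*q + c \<and> d*q \<le> L*i + c}"
    have "inj_on (\<lambda>q. d*q) ?A" using assms by (auto simp: inj_on_def)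
    moreover have "(\<lambda>q. d*q) ` ?A \<subseteq> {L*i - c..L*i+c}" by auto
    ultimately have "card ?A \<le> card {L*i - c..L*i+c}"
      by (meson card_inj_on_le finite_atLeastAtMost)
    also have "\<dots> \<le> 2*c+1" by simp
    finally show ?thesis .
  qed
  have "card (Eset L N d c) \<le> (\<Sum>i\<in>{..N}. card {q. L*i \<le> d*q + c \<and> d*q \<le> L*i + c})"
    unfolding eq by (rule card_UN_le) simp
  also have "\<dots> \<le> (\<Sum>i\<in>{..N}. 2*c+1)" by (rule sum_mono) (rule ci)
  also have "\<dots> = (N+1)*(2*c+1)" by simp
  finally show ?thesis .
qed

lemma QG_sub_E:
  assumes h: "0 < h" "0 < d" "d dvd h" "h \<le> s" and g: "g2 \<le> N"
    and a2: "d*a \<le> L*g1 + c0 + d" and b2: "L*g2 \<le> d*(b+1) + c0" and c: "c0 \<le> c"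
  shows "QG L h s d g1 g2 - {a..b} \<subseteq> Eset L N d c"
proof
  fix q assume q: "q \<in> QG L h s d g1 g2 - {a..b}"
  obtain h' where h': "h = d*h'" using h by (auto elim: dvdE)
  have hd: "h div d = h'" using h' h by simp
  from q obtain t u i where tu: "q = h'*t + u" "1 \<le> u" "u \<le> h'" "g1 < i" "i \<le> g2"
     "L*(i-1) \<le> h*t" "h*t + s \<le> L*i" and nab: "q < a \<or> b < q"
    by (auto simp: QG_def TG_def Tset_def hd)
  have ht: "h*t = d*(h'*t)" using h' by simp
  have dq: "d*q = d*(h'*t) + d*u" using tu by (simp add: algebra_simps)
  have du: "d*u \<le> h" "d \<le> d*u" using tu h' by auto
  have lo: "L*(i-1) < d*q" using tu ht dq du h by linarith
  have hi: "d*q \<le> L*i" using tu ht dq du h by linarith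
  show "q \<in> Eset L N d c"
    using nab
  proof
    assume "q < a"
    then have "q \<le> a - 1" by simp
    then have "d*q \<le> d*(a-1)" by simp
    also have "\<dots> = d*a - d" by (simp add: algebra_simps)
    finally have "d*q \<le> L*g1 + c0" using a2 by linarith
    moreover have "L*g1 \<le> L*(i-1)" using tu by (intro mult_le_mono2) simp
    ultimately have "L*g1 \<le> d*q + c" "d*q \<le> L*g1 + c" "g1 \<le> N" using lo c g tu by linarith+
    then show ?thesis unfolding Eset_def by blast
  next
    assume "b < q"
    then have "b+1 \<le> q" by simp
    then have "d*(b+1) \<le> d*q" by (rule mult_le_mono2)
    moreover have "L*i \<le> L*g2" using tu by simp
    ultimately have "L*g2 \<le> d*q + c" "d*q \<le> L*g2 + c" using hi c g b2 by linarith+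
    then show ?thesis unfolding Eset_def using g by blast
  qed
qed

lemma P_sub_QG_E:
  assumes h: "0 < h" "0 < d" "d dvd h" "h \<le> s" "s \<le> c" "h \<le> c" and g: "g2 \<le> N" "g1 \<le> g2"
    and a1: "L*g1 \<le> d*a + c0" and b1: "d*b \<le> L*g2 + c0" and c: "c0 \<le> c"
  shows "{a..b} - QG L h s d g1 g2 \<subseteq> Eset L N d c"
proof
  fix q assume q: "q \<in> {a..b} - QG L h s d g1 g2"
  show "q \<in> Eset L N d c"
  proof (rule ccontr)
    assume nE: "q \<notin> Eset L N d c"
    then have nE': "\<And>i. i \<le> N \<Longrightarrow> \<not> (L*i \<le> d*q + c \<and> d*q \<le> L*i + c)"
      by (auto simp: Eset_def)
    have "d*a \<le> d*q" "d*q \<le> d*b" using q by auto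
    then have "L*g1 \<le> d*q + c" using a1 c by linarith
    then have "\<not> d*q \<le> L*g1 + c" using nE'[of g1] g by simp
    then have lo: "L*g1 + c < d*q" by linarith
    have "d*q \<le> L*g2 + c" using b1 c \<open>d*q \<le> d*b\<close> by linarith
    then have "\<not> L*g2 \<le> d*q + c" using nE'[of g2] g by simp
    then have hi: "d*q + c < L*g2" by linarith
    have Lpos: "0 < L" using lo hi by (cases L) auto
    define i where "i = (d*q - 1) div L + 1"
    have dq1: "1 \<le> d*q" using lo by linarith
    have i1: "L*(i-1) \<le> d*q - 1" unfolding i_def by simp
    have i2: "d*q - 1 < L*i" unfolding i_def using Lpos
      by (metis add.commute dividend_less_div_times plus_1_eq_Suc mult.commute mult_Suc_right)
    have ig1: "g1 < i"
    proof (rule ccontr)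
      assume "\<not> g1 < i" then have "L*i \<le> L*g1" by simp
      then show False using i2 lo by linarith
    qed
    have ig2: "i \<le> g2"
    proof (rule ccontr)
      assume "\<not> i \<le> g2" then have "g2 \<le> i - 1" by simp
      then have "L*g2 \<le> L*(i-1)" by simp
      then show False using i1 hi by linarith
    qed
    have "L*(i-1) \<le> d*q + c" using i1 by linarith
    then have "\<not> d*q \<le> L*(i-1) + c" using nE'[of "i-1"] ig2 g by simp
    then have lo2: "L*(i-1) + c < d*q" by linarith
    have "d*q \<le> L*i + c" using i2 by linarith
    then have "\<not> L*i \<le> d*q + c" using nE'[of i] ig2 g by simp
    then have hi2: "d*q + c < L*i" by linarith
    obtain h' where h': "h = d*h'" using h by (auto elim: dvdE)
    have hd: "h div d = h'" using h' h by simp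
    have h'pos: "0 < h'" using h h' by simp
    define t where "t = (q-1) div h'"
    define r where "r = (q-1) mod h'"
    have q1: "q - 1 = h'*t + r" unfolding t_def r_def by simp
    have rl: "r < h'" unfolding r_def using h'pos by simp
    have qpos: "1 \<le> q" using dq1 by (cases q) auto
    have ht: "h*t = d*(h'*t)" using h' by simp
    have e1: "d*(q-1) = d*(h'*t) + d*r" using q1 by (simp add: algebra_simps)
    have e2: "d*(q-1) = d*q - d" by (simp add: algebra_simps)
    have dr: "d*r + d \<le> h" using rl h' by (metis Suc_leI mult_Suc_right add.commute mult_le_mono2 plus_1_eq_Suc)
    have "d \<le> d*q" using qpos by simp
    have T1: "L*(i-1) \<le> h*t" using ht e1 e2 dr lo2 h \<open>d \<le> d*q\<close> by linarith
    have T2: "h*t + s \<le> L*i" using ht e1 e2 dr hi2 h \<open>d \<le> d*q\<close> by linarith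
    have "t \<in> TG L h s g1 g2" unfolding TG_def Tset_def using T1 T2 ig1 ig2 by auto
    moreover have "q = h'*t + (r+1)" using q1 qpos by simp
    moreover have "r + 1 \<in> {1..h div d}" using rl hd by simp
    ultimately have "q \<in> QG L h s d g1 g2" unfolding QG_def using hd by (auto intro!: image_eqI[of _ _ "(t, r+1)"])
    then show False using q by simp
  qed
qed

lemma win_shift: "win (\<lambda>k. e (a + k)) u m = win e (a + u) m"
  by (simp add: win_def add.assoc)

lemma win_meas_H0:
  assumes "sets P = sets X"
  shows "(\<lambda>w. win w u m) \<in> measurable (H0 P) (PiM {..<m} (\<lambda>_. X))"
proof -
  have "(\<lambda>w. \<lambda>k\<in>{..<m}. w (u + k)) \<in> measurable (H0 P) (PiM {..<m} (\<lambda>_. X))"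
  proof (rule measurable_restrict)
    fix k assume "k \<in> {..<m}"
    have "(\<lambda>w. w (u + k)) \<in> measurable (H0 P) P"
      unfolding H0_def by (rule measurable_component_singleton) simp
    then show "(\<lambda>w. w (u + k)) \<in> measurable (H0 P) X"
      using measurable_cong_sets[of "H0 P" "H0 P" P X] assms by simp
  qed
  then show ?thesis by (simp add: win_def)
qed

lemma EH0_win:
  assumes P: "prob_space P" and S: "sets P = sets X"
    and g: "g \<in> borel_measurable (PiM {..<m} (\<lambda>_. X))"
  shows "EH0 P (\<lambda>w. g (win w u m)) = integral\<^sup>L (PiM {..<m} (\<lambda>_. P)) g"
proof -
  have SS: "sets (PiM {..<m} (\<lambda>_. X)) = sets (PiM {..<m} (\<lambda>_. P))"
    using S by (intro sets_PiM_cong) auto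
  have g': "g \<in> borel_measurable (PiM {..<m} (\<lambda>_. P))"
  proof -
    have eq: "borel_measurable (PiM {..<m} (\<lambda>_. X)) = borel_measurable (PiM {..<m} (\<lambda>_. P))"
      by (rule measurable_cong_sets[OF SS refl])
    show ?thesis using g unfolding eq .
  qed
  have T: "(\<lambda>w. win w u m) \<in> measurable (H0 P) (PiM {..<m} (\<lambda>_. P))"
    using win_meas_H0[of P P u m] by simp
  have D: "distr (PiM UNIV (\<lambda>_. P)) (PiM {..<m} (\<lambda>_. P)) (\<lambda>\<omega>. \<lambda>n\<in>{..<m}. \<omega> (u + n))
      = PiM {..<m} (\<lambda>_. P)"
    using distr_PiM_reindex[of UNIV "\<lambda>_. P" "\<lambda>n. u + n" "{..<m}"] P
    by (simp add: inj_on_def)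
  have "integral\<^sup>L (PiM {..<m} (\<lambda>_. P)) g
      = integral\<^sup>L (distr (H0 P) (PiM {..<m} (\<lambda>_. P)) (\<lambda>w. win w u m)) g"
    using D by (simp add: H0_def win_def)
  also have "\<dots> = EH0 P (\<lambda>w. g (win w u m))"
    unfolding EH0_def by (rule integral_distr[OF T g'])
  finally show ?thesis by simp
qed

lemma win_space_H0:
  assumes "sets P = sets X" "w \<in> space (H0 P)"
  shows "win w u m \<in> space (PiM {..<m} (\<lambda>_. X))"
  using assms sets_eq_imp_space_eq[OF assms(1)]
  by (auto simp: H0_def win_def space_PiM PiE_def)

lemma integrable_H0_win:
  fixes B :: real
  assumes P: "prob_space P" and S: "sets P = sets X"
    and g: "g \<in> borel_measurable (PiM {..<m} (\<lambda>_. X))"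
    and B: "\<forall>\<theta>\<in>space (PiM {..<m} (\<lambda>_. X)). \<bar>g \<theta>\<bar> \<le> B"
  shows "integrable (H0 P) (\<lambda>w. g (win w u m))"
proof -
  interpret prob_space "H0 P" unfolding H0_def using P
    by (intro prob_space_PiM) auto
  show ?thesis
  proof (rule integrable_const_bound[of _ B])
    show "AE x in H0 P. norm (g (win x u m)) \<le> B"
      using B win_space_H0[OF S] by (intro AE_I2) auto
    show "(\<lambda>w. g (win w u m)) \<in> borel_measurable (H0 P)"
      using measurable_comp[OF win_meas_H0[OF S] g] by (simp add: comp_def)
  qed
qed

lemma EH0_sum_win:
  fixes B :: real
  assumes P: "prob_space P" and S: "sets P = sets X"
    and g: "g \<in> borel_measurable (PiM {..<m} (\<lambda>_. X))"
    and B: "\<forall>\<theta>\<in>space (PiM {..<m} (\<lambda>_. X)). \<bar>g \<theta>\<bar> \<le> B"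
    and fin: "finite U"
  shows "EH0 P (\<lambda>w. (\<Sum>u\<in>U. g (win w (a u) m)) / c) = real (card U) * EH0 P (\<lambda>w. g (win w 1 m)) / c"
proof -
  have "EH0 P (\<lambda>w. (\<Sum>u\<in>U. g (win w (a u) m)) / c) = (\<Sum>u\<in>U. EH0 P (\<lambda>w. g (win w (a u) m))) / c"
    unfolding EH0_def
  proof -
    have "integral\<^sup>L (H0 P) (\<lambda>w. \<Sum>u\<in>U. g (win w (a u) m)) = (\<Sum>u\<in>U. integral\<^sup>L (H0 P) (\<lambda>w. g (win w (a u) m)))"
      using Bochner_Integration.integral_sum[where I=U and M="H0 P" and f="\<lambda>u w. g (win w (a u) m)"] integrable_H0_win[OF P S g B] by simp
    then show "integral\<^sup>L (H0 P) (\<lambda>w. (\<Sum>u\<in>U. g (win w (a u) m)) / c) = (\<Sum>u\<in>U. integral\<^sup>L (H0 P) (\<lambda>w. g (win w (a u) m))) / c"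
      by simp
  qed
  also have "\<dots> = (\<Sum>u\<in>U. EH0 P (\<lambda>w. g (win w 1 m))) / c"
    using EH0_win[OF P S g] by simp
  finally show ?thesis by simp
qed

lemma ind_meas:
  assumes "F \<in> borel_measurable M" "A \<in> sets borel"
  shows "(\<lambda>w. if F w \<in> A then 1 else 0 :: real) \<in> borel_measurable M"
  using assms by measurable

lemma sum_QG:
  assumes h: "0 < h" "0 < d" "d dvd h"
  shows "(\<Sum>t\<in>TG L h s g1 g2. \<Sum>u=1..h div d. g ((h div d)*t + u)) = (\<Sum>q\<in>QG L h s d g1 g2. g q)"
proof -
  define h' where "h' = h div d"
  have h'pos: "0 < h'" using h unfolding h'_def by (auto elim!: dvdE)
  let ?f = "\<lambda>(t,u). h'*t + u"
  have inj: "inj_on ?f (TG L h s g1 g2 \<times> {1..h'})"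
  proof (rule inj_onI)
    fix p p' assume pp: "p \<in> TG L h s g1 g2 \<times> {1..h'}" "p' \<in> TG L h s g1 g2 \<times> {1..h'}" "?f p = ?f p'"
    obtain t u t' u' where tu: "p = (t,u)" "p' = (t',u')" by fastforce
    have a: "u \<ge> 1" "u \<le> h'" "u' \<ge> 1" "u' \<le> h'" "h'*t + u = h'*t' + u'" using pp tu by auto
    have "t = t'"
    proof (rule ccontr)
      assume "t \<noteq> t'"
      then consider "t + 1 \<le> t'" | "t' + 1 \<le> t" by linarith
      then show False
      proof cases
        case 1 then have "h'*(t+1) \<le> h'*t'" by (rule mult_le_mono2)
        then show False using a by (simp add: algebra_simps)
      next
        case 2 then have "h'*(t'+1) \<le> h'*t" by (rule mult_le_mono2)
        then show False using a by (simp add: algebra_simps)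
      qed
    qed
    then show "p = p'" using a tu by simp
  qed
  have "(\<Sum>t\<in>TG L h s g1 g2. \<Sum>u=1..h'. g (h'*t + u)) = (\<Sum>(t,u)\<in>TG L h s g1 g2 \<times> {1..h'}. g (h'*t + u))"
    by (rule sum.cartesian_product)
  also have "\<dots> = (\<Sum>q\<in>?f ` (TG L h s g1 g2 \<times> {1..h'}). g q)"
    using sum.reindex[OF inj, of g] by (simp add: comp_def case_prod_beta)
  finally show ?thesis unfolding QG_def h'_def by simp
qed

lemma sum_TG:
  assumes "0 < h" "0 < s"
  shows "(\<Sum>i\<in>{g1<..g2}. \<Sum>t\<in>Tset L h s i. F t) = (\<Sum>t\<in>TG L h s g1 g2. F t)"
  unfolding TG_def
  by (rule sum.UNION_disjoint[symmetric]) (use assms finite_Tset Tset_disjoint in auto)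

lemma diff_bound:
  fixes g :: "nat \<Rightarrow> real"
  assumes "finite P" "finite Q" "finite E" "P - Q \<subseteq> E" "Q - P \<subseteq> E" "\<forall>q\<in>P\<union>Q. \<bar>g q\<bar> \<le> B" "0 \<le> B"
  shows "\<bar>sum g P - sum g Q\<bar> \<le> B * card E"
proof -
  have "sum g P = sum g (P \<inter> Q) + sum g (P - Q)"
    using assms(1) by (rule sum.Int_Diff)
  moreover have "sum g Q = sum g (Q \<inter> P) + sum g (Q - P)"
    using assms(2) by (rule sum.Int_Diff)
  moreover have "Q \<inter> P = P \<inter> Q" by blast
  ultimately have "\<bar>sum g P - sum g Q\<bar> = \<bar>sum g (P - Q) - sum g (Q - P)\<bar>" by simp
  also have "\<dots> \<le> \<bar>sum g (P - Q)\<bar> + \<bar>sum g (Q - P)\<bar>" by linarith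
  also have "\<dots> \<le> sum (\<lambda>q. \<bar>g q\<bar>) (P - Q) + sum (\<lambda>q. \<bar>g q\<bar>) (Q - P)"
    by (intro add_mono sum_abs)
  also have "\<dots> = sum (\<lambda>q. \<bar>g q\<bar>) ((P - Q) \<union> (Q - P))"
    by (rule sum.union_disjoint[symmetric]) (use assms in auto)
  also have "\<dots> \<le> sum (\<lambda>q. B) ((P - Q) \<union> (Q - P))"
    by (rule sum_mono) (use assms in auto)
  also have "\<dots> = B * card ((P - Q) \<union> (Q - P))" by simp
  also have "\<dots> \<le> B * card E"
    using assms by (intro mult_left_mono) (auto intro!: card_mono)
  finally show ?thesis .
qed

lemma cvg_prob_sum:
  assumes M: "\<And>n. prob_space (M n)" and I: "finite I"
    and meas: "\<And>i n. i \<in> I \<Longrightarrow> Z i n \<in> borel_measurable (M n)"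
    and cv: "\<And>i. i \<in> I \<Longrightarrow> cvg_prob M (Z i) (c i)"
  shows "cvg_prob M (\<lambda>n w. \<Sum>i\<in>I. Z i n w) (\<Sum>i\<in>I. c i)"
  unfolding cvg_prob_def
proof (intro allI impI)
  fix \<delta> :: real assume d: "0 < \<delta>"
  show "(\<lambda>n. measure (M n) {w \<in> space (M n). \<bar>(\<Sum>i\<in>I. Z i n w) - (\<Sum>i\<in>I. c i)\<bar> > \<delta>}) \<longlonglongrightarrow> 0"
  proof (cases "I = {}")
    case True then show ?thesis using d by simp
  next
    case False
    then have cI: "0 < card I" using I by (simp add: card_gt_0_iff)
    define \<delta>' where "\<delta>' = \<delta> / card I"
    have d': "0 < \<delta>'" unfolding \<delta>'_def using d cI by simp
    have sub: "{w \<in> space (M n). \<bar>(\<Sum>i\<in>I. Z i n w) - (\<Sum>i\<in>I. c i)\<bar> > \<delta>}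
        \<subseteq> (\<Union>i\<in>I. {w \<in> space (M n). \<bar>Z i n w - c i\<bar> > \<delta>'})" for n
    proof
      fix w assume w: "w \<in> {w \<in> space (M n). \<bar>(\<Sum>i\<in>I. Z i n w) - (\<Sum>i\<in>I. c i)\<bar> > \<delta>}"
      show "w \<in> (\<Union>i\<in>I. {w \<in> space (M n). \<bar>Z i n w - c i\<bar> > \<delta>'})"
      proof (rule ccontr)
        assume "w \<notin> (\<Union>i\<in>I. {w \<in> space (M n). \<bar>Z i n w - c i\<bar> > \<delta>'})"
        then have le: "\<And>i. i \<in> I \<Longrightarrow> \<bar>Z i n w - c i\<bar> \<le> \<delta>'" using w by auto
        have "\<bar>(\<Sum>i\<in>I. Z i n w) - (\<Sum>i\<in>I. c i)\<bar> = \<bar>\<Sum>i\<in>I. Z i n w - c i\<bar>"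
          by (simp add: sum_subtractf)
        also have "\<dots> \<le> (\<Sum>i\<in>I. \<bar>Z i n w - c i\<bar>)" by (rule sum_abs)
        also have "\<dots> \<le> (\<Sum>i\<in>I. \<delta>')" by (rule sum_mono) (rule le)
        also have "\<dots> = \<delta>" unfolding \<delta>'_def using cI by simp
        finally show False using w by simp
      qed
    qed
    have bound: "measure (M n) {w \<in> space (M n). \<bar>(\<Sum>i\<in>I. Z i n w) - (\<Sum>i\<in>I. c i)\<bar> > \<delta>}
        \<le> (\<Sum>i\<in>I. measure (M n) {w \<in> space (M n). \<bar>Z i n w - c i\<bar> > \<delta>'})" for n
    proof -
      interpret prob_space "M n" by (rule M)
      have ms: "{w \<in> space (M n). \<bar>Z i n w - c i\<bar> > \<delta>'} \<in> sets (M n)" if "i \<in> I" for i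
        by (rule borel_measurable_less) (use meas[OF that, of n] in auto)
      have "measure (M n) {w \<in> space (M n). \<bar>(\<Sum>i\<in>I. Z i n w) - (\<Sum>i\<in>I. c i)\<bar> > \<delta>}
          \<le> measure (M n) (\<Union>i\<in>I. {w \<in> space (M n). \<bar>Z i n w - c i\<bar> > \<delta>'})"
        using sub ms I by (intro finite_measure_mono) auto
      also have "\<dots> \<le> (\<Sum>i\<in>I. measure (M n) {w \<in> space (M n). \<bar>Z i n w - c i\<bar> > \<delta>'})"
        using ms I by (intro finite_measure_subadditive_finite) auto
      finally show ?thesis .
    qed
    have lim: "(\<lambda>n. \<Sum>i\<in>I. measure (M n) {w \<in> space (M n). \<bar>Z i n w - c i\<bar> > \<delta>'}) \<longlonglongrightarrow> 0"
      using cv d' unfolding cvg_prob_def by (intro tendsto_null_sum) auto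
    show ?thesis
      by (rule tendsto_sandwich[OF _ _ tendsto_const lim]) (use bound in auto)
  qed
qed

lemma pinf_crit:
  assumes M: "\<And>n. prob_space (M n)"
    and meas: "\<And>n. Z n \<in> borel_measurable (M n)"
    and cv: "cvg_prob M Z c" and d: "0 < \<delta>"
    and ev: "\<forall>\<^sub>F n in sequentially. \<forall>w\<in>space (M n). \<bar>Z n w - c\<bar> \<le> \<delta> \<longrightarrow> \<beta> n \<le> Y n w"
    and bt: "filterlim \<beta> at_top sequentially"
  shows "cvg_prob_pinf M Y"
  unfolding cvg_prob_pinf_def
proof
  fix B :: real
  have ev2: "\<forall>\<^sub>F n in sequentially. B < \<beta> n" using bt by (simp add: filterlim_at_top_dense)
  have lim: "(\<lambda>n. measure (M n) {w \<in> space (M n). \<bar>Z n w - c\<bar> > \<delta>}) \<longlonglongrightarrow> 0"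
    using cv d unfolding cvg_prob_def by auto
  have "\<forall>\<^sub>F n in sequentially. measure (M n) {w \<in> space (M n). Y n w \<le> B}
      \<le> measure (M n) {w \<in> space (M n). \<bar>Z n w - c\<bar> > \<delta>}"
    using ev ev2
  proof eventually_elim
    case (elim n)
    interpret prob_space "M n" by (rule M)
    have sub: "{w \<in> space (M n). Y n w \<le> B} \<subseteq> {w \<in> space (M n). \<bar>Z n w - c\<bar> > \<delta>}"
      using elim by force
    have ms: "{w \<in> space (M n). \<bar>Z n w - c\<bar> > \<delta>} \<in> sets (M n)"
      by (rule borel_measurable_less) (use meas[of n] in auto)
    show ?case by (rule finite_measure_mono[OF sub ms])
  qed
  then show "(\<lambda>n. measure (M n) {w \<in> space (M n). Y n w \<le> B}) \<longlonglongrightarrow> 0"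
    by (rule tendsto_sandwich[OF _ _ tendsto_const lim, rotated]) simp
qed

lemma minf_of_pinf:
  assumes "cvg_prob_pinf M (\<lambda>n w. - Y n w)"
  shows "cvg_prob_minf M Y"
  unfolding cvg_prob_minf_def
proof
  fix B :: real
  have "(\<lambda>n. measure (M n) {w \<in> space (M n). - Y n w \<le> - B}) \<longlonglongrightarrow> 0"
    using assms unfolding cvg_prob_pinf_def by blast
  then show "(\<lambda>n. measure (M n) {w \<in> space (M n). B \<le> Y n w}) \<longlonglongrightarrow> 0" by simp
qed

lemma cvg_prob_neg:
  assumes "cvg_prob M Z c"
  shows "cvg_prob M (\<lambda>n w. - Z n w) (- c)"
  using assms unfolding cvg_prob_def by (simp add: abs_minus_commute)

lemma sum_groups:
  fixes a b :: nat and f :: "nat \<Rightarrow> real"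
  shows "(\<Sum>k=1..a. \<Sum>i=1..b. f (b*(k-1)+i)) = (\<Sum>i=1..a*b. (f i :: real))"
proof (induction a)
  case 0 then show ?case by simp
next
  case (Suc a)
  have e1: "(\<Sum>k=1..Suc a. \<Sum>i=1..b. f (b*(k-1)+i)) = (\<Sum>k=1..a. \<Sum>i=1..b. f (b*(k-1)+i)) + (\<Sum>i=1..b. f (b*a+i))"
    by simp
  have e2: "(\<Sum>i=1..b. f (b*a+i)) = (\<Sum>i=1+a*b..b+a*b. f i)"
    using sum.shift_bounds_cl_nat_ivl[of f 1 "a*b" b] by (simp add: add.commute mult.commute)
  have e3: "(\<Sum>i=1..a*b+b. f i) = (\<Sum>i=1..a*b. f i) + (\<Sum>i=a*b+1..a*b+b. f i)"
    by (rule sum.ub_add_nat) simp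
  show ?case using Suc e1 e2 e3 by (simp add: algebra_simps)
qed

lemma sum_group_shift:
  fixes b k :: nat and f :: "nat \<Rightarrow> real"
  assumes "1 \<le> k"
  shows "(\<Sum>i=1..b. f (b*(k-1)+i)) = (\<Sum>i\<in>{b*(k-1)<..b*k}. (f i :: real))"
proof -
  have bk: "b*k = b + b*(k-1)" using assms by (cases k) auto
  have "{b*(k-1)<..b*k} = {1 + b*(k-1)..b + b*(k-1)}" using bk by auto
  then show ?thesis using sum.shift_bounds_cl_nat_ivl[of f 1 "b*(k-1)" b] by (simp add: add.commute)
qed

lemma QG_range:
  assumes "q \<in> QG L h s d g1 g2" "0 < d" "d dvd h"
  shows "1 \<le> q \<and> d*q + s \<le> L*g2 + h"
proof -
  obtain h' where h': "h = d*h'" using assms by (auto elim: dvdE)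
  have hd: "h div d = h'" using h' assms by simp
  from assms obtain t u i where tu: "q = h'*t + u" "1 \<le> u" "u \<le> h'" "g1 < i" "i \<le> g2"
     "L*(i-1) \<le> h*t" "h*t + s \<le> L*i"
    by (auto simp: QG_def TG_def Tset_def hd)
  have ht: "h*t = d*(h'*t)" using h' by simp
  have dq: "d*q = d*(h'*t) + d*u" using tu by (simp add: algebra_simps)
  have du: "d*u \<le> h" using tu h' by auto
  have "L*i \<le> L*g2" using tu by simp
  then show ?thesis using tu ht dq du by linarith
qed

lemma cover_bound:
  fixes g :: "nat \<Rightarrow> real"
  assumes h: "0 < h" "0 < d" "d dvd h" "h \<le> s" and c: "c = c0 + s + h" and g: "g2 \<le> N" "g1 \<le> g2"
   and a1: "L*g1 \<le> d*a + c0" and a2: "d*a \<le> L*g1 + c0 + d"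
   and b1: "d*b \<le> L*g2 + c0" and b2: "L*g2 \<le> d*(b+1) + c0"
   and B: "\<forall>q\<in>{a..b} \<union> QG L h s d g1 g2. \<bar>g q\<bar> \<le> B" "0 \<le> B"
  shows "\<bar>(\<Sum>q\<in>{a..b}. g q) - (\<Sum>i\<in>{g1<..g2}. \<Sum>t\<in>Tset L h s i. \<Sum>u=1..h div d. g ((h div d)*t+u))\<bar>
     \<le> B * real ((N+1)*(2*c+1))"
proof -
  have s0: "0 < s" using h by simp
  have eq: "(\<Sum>i\<in>{g1<..g2}. \<Sum>t\<in>Tset L h s i. \<Sum>u=1..h div d. g ((h div d)*t+u)) = (\<Sum>q\<in>QG L h s d g1 g2. g q)"
  proof -
    have "(\<Sum>i\<in>{g1<..g2}. \<Sum>t\<in>Tset L h s i. \<Sum>u=1..h div d. g ((h div d)*t+u))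
        = (\<Sum>t\<in>TG L h s g1 g2. \<Sum>u=1..h div d. g ((h div d)*t+u))"
      by (rule sum_TG[OF h(1) s0])
    then show ?thesis using sum_QG[OF h(1-3)] by simp
  qed
  have fQ: "finite (QG L h s d g1 g2)" unfolding QG_def using finite_TG[OF h(1)] by simp
  have "\<bar>(\<Sum>q\<in>{a..b}. g q) - (\<Sum>q\<in>QG L h s d g1 g2. g q)\<bar> \<le> B * real (card (Eset L N d c))"
  proof (rule diff_bound)
    show "finite {a..b}" by simp
    show "finite (QG L h s d g1 g2)" by (rule fQ)
    show "finite (Eset L N d c)" using finite_Eset[OF h(2)] .
    show "{a..b} - QG L h s d g1 g2 \<subseteq> Eset L N d c"
      by (rule P_sub_QG_E[where ?c0.0=c0]) (use h c g a1 b1 in auto)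
    show "QG L h s d g1 g2 - {a..b} \<subseteq> Eset L N d c"
      by (rule QG_sub_E[where ?c0.0=c0]) (use h c g a2 b2 in auto)
  qed (use B in auto)
  also have "\<dots> \<le> B * real ((N+1)*(2*c+1))"
    using card_Eset[OF h(2), of L N c] B(2) by (intro mult_left_mono) (simp only: of_nat_le_iff, simp_all)
  finally show ?thesis using eq by simp
qed

lemma idx_shift: fixes u h d h' t :: nat shows "1 \<le> u \<Longrightarrow> h = d*h' \<Longrightarrow> h*t + (d*(u-1)+1) = d*(h'*t+u-1)+1"
  by (cases u) (auto simp: algebra_simps)

locale LS =
  fixes C :: "('a::topological_space) cfg" and Xset :: "'a set" and N s h :: nat
    and M :: "nat \<Rightarrow> 'b measure" and eps :: "nat \<Rightarrow> 'b \<Rightarrow> nat \<Rightarrow> 'a" and XM :: "'a measure"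
  assumes XM: "XM = restrict_space borel Xset"
  and P0: "prob_space (P0 C)" "sets (P0 C) = sets XM"
  and pos: "0 < msum C" "0 < mlb C" "0 < Nlb C" "0 < Lsb C" "0 < N" "0 < h"
  and meas_sum: "fsum C \<in> borel_measurable (PiM {..<msum C} (\<lambda>_. XM))"
  and meas_lb: "flb C \<in> borel_measurable (PiM {..<mlb C} (\<lambda>_. XM))"
  and meas_sb: "fsb C \<in> borel_measurable (PiM {..<Lsb C} (\<lambda>_. XM))"
  and bdd_sum: "\<exists>B. \<forall>\<theta>\<in>space (PiM {..<msum C} (\<lambda>_. XM)). \<bar>fsum C \<theta>\<bar> \<le> B"
  and bdd_lb: "\<exists>B. \<forall>\<theta>\<in>space (PiM {..<mlb C} (\<lambda>_. XM)). \<bar>flb C \<theta>\<bar> \<le> B"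
  and alpha_b: "\<forall>j\<le>Ksb C. alpha C j \<in> sets borel"
  and sig: "0 < sigma (P0 C) (fsum C) (msum C)" "0 < sigma (P0 C) (flb C) (mlb C)"
  and Esb_pos: "\<forall>j\<le>Ksb C. 0 < Esb C j"
  and s_ge: "s \<ge> h + max (msum C) (mlb C) - 1"
  and dvd: "Nlb C dvd N" "Lsb C dvd h"
  and scheme: "\<forall>n. prob_space (M n)"
      "\<forall>n. \<forall>i\<in>{1..n}. (\<lambda>w. eps n w i) \<in> measurable (M n) XM"
begin

definition Sx where
  "Sx n i j e = (\<Sum>t\<in>Tset (n div N) h s i. fs C h j (\<lambda>k. e (h*t+k)) - EH0 (P0 C) (fs C h j))"

definition Zx where "Zx i j n w = Xcal C N s h n i j (eps n w) / sqrt (real n)"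

definition Bs where "Bs = (SOME B. \<forall>\<theta>\<in>space (PiM {..<msum C} (\<lambda>_. XM)). \<bar>fsum C \<theta>\<bar> \<le> B)"
definition Bl where "Bl = (SOME B. \<forall>\<theta>\<in>space (PiM {..<mlb C} (\<lambda>_. XM)). \<bar>flb C \<theta>\<bar> \<le> B)"

definition gs where "gs e p = fsum C (win e p (msum C)) - Emean (P0 C) (fsum C) (msum C)"
definition gl where "gl e p = flb C (win e p (mlb C)) - Emean (P0 C) (flb C) (mlb C)"
definition Gb where "Gb j e q = (if fsb C (win e (Lsb C*(q-1)+1) (Lsb C)) \<in> alpha C j then 1 else 0) - Esb C j"

lemma Bs: "\<forall>\<theta>\<in>space (PiM {..<msum C} (\<lambda>_. XM)). \<bar>fsum C \<theta>\<bar> \<le> Bs"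
  unfolding Bs_def by (rule someI_ex[OF bdd_sum])
lemma Bl: "\<forall>\<theta>\<in>space (PiM {..<mlb C} (\<lambda>_. XM)). \<bar>flb C \<theta>\<bar> \<le> Bl"
  unfolding Bl_def by (rule someI_ex[OF bdd_lb])

lemma s_ge': "h + msum C \<le> s + 1" "h + mlb C \<le> s + 1" "h \<le> s" "msum C \<le> s" "mlb C \<le> s"
  using s_ge pos by auto

lemma Zx_eq: "Zx i j n w = Sx n i j (eps n w) / real n"
  unfolding Zx_def Xcal_def Sx_def Tset_def Let_def
  by (simp add: divide_divide_eq_left real_sqrt_mult_self)

lemma space_XM: "space XM = Xset" using XM by (simp add: space_restrict_space)

lemma eps_in: "w \<in> space (M n) \<Longrightarrow> 1 \<le> p \<Longrightarrow> p \<le> n \<Longrightarrow> eps n w p \<in> Xset"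
proof -
  assume a: "w \<in> space (M n)" "1 \<le> p" "p \<le> n"
  then have "(\<lambda>w. eps n w p) \<in> measurable (M n) XM" using scheme(2) by auto
  from measurable_space[OF this a(1)] show ?thesis using space_XM by simp
qed

lemma win_in:
  assumes "w \<in> space (M n)" "1 \<le> p" "p + m \<le> n + 1"
  shows "win (eps n w) p m \<in> space (PiM {..<m} (\<lambda>_. XM))"
  unfolding win_def space_PiM space_XM restrict_PiE_iff
  using assms by (auto intro!: eps_in)

lemma win_meas:
  assumes "1 \<le> p" "p + m \<le> n + 1"
  shows "(\<lambda>w. win (eps n w) p m) \<in> measurable (M n) (PiM {..<m} (\<lambda>_. XM))"
  unfolding win_def
proof (rule measurable_restrict)
  fix k assume "k \<in> {..<m}"
  then have "p + k \<in> {1..n}" using assms by auto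
  then show "(\<lambda>w. eps n w (p + k)) \<in> measurable (M n) XM" using scheme(2) by auto
qed

lemma gs_bound:
  assumes "w \<in> space (M n)" "1 \<le> p" "p + msum C \<le> n + 1"
  shows "\<bar>gs (eps n w) p\<bar> \<le> Bs + \<bar>Emean (P0 C) (fsum C) (msum C)\<bar>"
  using Bs win_in[OF assms] unfolding gs_def by fastforce

lemma gl_bound:
  assumes "w \<in> space (M n)" "1 \<le> p" "p + mlb C \<le> n + 1"
  shows "\<bar>gl (eps n w) p\<bar> \<le> Bl + \<bar>Emean (P0 C) (flb C) (mlb C)\<bar>"
  using Bl win_in[OF assms] unfolding gl_def by fastforce

lemma H0_prob: "prob_space (H0 (P0 C))"
  unfolding H0_def using P0 by (intro prob_space_PiM) auto

lemma Esb_le1: "Esb C j \<le> 1"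
proof -
  interpret prob_space "H0 (P0 C)" by (rule H0_prob)
  show ?thesis unfolding Esb_def by (rule prob_le_1)
qed

lemma Gb_bound: "j \<le> Ksb C \<Longrightarrow> \<bar>Gb j e q\<bar> \<le> 1"
  using Esb_le1[of j] Esb_pos unfolding Gb_def by auto

lemma EH0_fs_sum:
  "EH0 (P0 C) (fs C h (Ksb C + 2)) = real h * Emean (P0 C) (fsum C) (msum C) / sigma (P0 C) (fsum C) (msum C)"
proof -
  have "fs C h (Ksb C + 2) = (\<lambda>w. (\<Sum>u\<in>{1..h}. fsum C (win w (id u) (msum C))) / sigma (P0 C) (fsum C) (msum C))"
    by (rule ext) (simp add: fs_def)
  then show ?thesis
    using EH0_sum_win[OF P0(1) P0(2) meas_sum Bs, where U="{1..h}" and a=id and c="sigma (P0 C) (fsum C) (msum C)"]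
    by (simp add: Emean_def)
qed

lemma EH0_fs_lb:
  "EH0 (P0 C) (fs C h (Ksb C + 1)) = real h * Emean (P0 C) (flb C) (mlb C) / sigma (P0 C) (flb C) (mlb C)"
proof -
  have "fs C h (Ksb C + 1) = (\<lambda>w. (\<Sum>u\<in>{1..h}. flb C (win w (id u) (mlb C))) / sigma (P0 C) (flb C) (mlb C))"
    by (rule ext) (simp add: fs_def)
  then show ?thesis
    using EH0_sum_win[OF P0(1) P0(2) meas_lb Bl, where U="{1..h}" and a=id and c="sigma (P0 C) (flb C) (mlb C)"]
    by (simp add: Emean_def)
qed

lemma EH0_fs_sb:
  assumes j: "j \<le> Ksb C"
  shows "EH0 (P0 C) (fs C h j) = real (h div Lsb C) * Esb C j / sqrt (Esb C j)"
proof -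
  let ?g = "\<lambda>\<theta>. if fsb C \<theta> \<in> alpha C j then 1 else (0::real)"
  have gm: "?g \<in> borel_measurable (PiM {..<Lsb C} (\<lambda>_. XM))"
    by (rule ind_meas[OF meas_sb]) (use alpha_b j in auto)
  have gb: "\<forall>\<theta>\<in>space (PiM {..<Lsb C} (\<lambda>_. XM)). \<bar>?g \<theta>\<bar> \<le> 1" by simp
  have "fs C h j = (\<lambda>w. (\<Sum>u\<in>{1..h div Lsb C}. ?g (win w ((\<lambda>u. Lsb C * (u - 1) + 1) u) (Lsb C))) / sqrt (Esb C j))"
    using j by (intro ext) (simp add: fs_def)
  then have "EH0 (P0 C) (fs C h j) = real (h div Lsb C) * EH0 (P0 C) (\<lambda>w. ?g (win w 1 (Lsb C))) / sqrt (Esb C j)"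
    using EH0_sum_win[OF P0(1) P0(2) gm gb, where U="{1..h div Lsb C}" and a="\<lambda>u. Lsb C * (u - 1) + 1" and c="sqrt (Esb C j)"]
    by simp
  moreover have "EH0 (P0 C) (\<lambda>w. ?g (win w 1 (Lsb C))) = Esb C j"
  proof -
    have "(\<lambda>w. ?g (win w 1 (Lsb C))) = indicator {w. fsb C (win w 1 (Lsb C)) \<in> alpha C j}"
      by (rule ext) (simp add: indicator_def)
    moreover have "{w. fsb C (win w 1 (Lsb C)) \<in> alpha C j} \<inter> space (H0 (P0 C))
        = {w \<in> space (H0 (P0 C)). fsb C (win w 1 (Lsb C)) \<in> alpha C j}" by auto
    ultimately show ?thesis unfolding EH0_def Esb_def by simp
  qed
  ultimately show ?thesis by simp
qed

end

context LS begin

lemma S_sum: "sigma (P0 C) (fsum C) (msum C) * Sx n i (Ksb C + 2) e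
   = (\<Sum>t\<in>Tset (n div N) h s i. \<Sum>u=1..h. gs e (h*t+u))"
proof -
  have each: "fs C h (Ksb C+2) (\<lambda>k. e(h*t+k)) - EH0 (P0 C) (fs C h (Ksb C+2))
     = (\<Sum>u=1..h. gs e (h*t+u)) / sigma (P0 C) (fsum C) (msum C)" for t
    by (simp add: fs_def win_shift EH0_fs_sum[simplified] gs_def sum_subtractf diff_divide_distrib)
  show ?thesis unfolding Sx_def each using sig by (simp only: sum_divide_distrib[symmetric]) simp
qed

lemma S_lb: "sigma (P0 C) (flb C) (mlb C) * Sx n i (Ksb C + 1) e
   = (\<Sum>t\<in>Tset (n div N) h s i. \<Sum>u=1..h. gl e (h*t+u))"
proof -
  have each: "fs C h (Ksb C+1) (\<lambda>k. e(h*t+k)) - EH0 (P0 C) (fs C h (Ksb C+1))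
     = (\<Sum>u=1..h. gl e (h*t+u)) / sigma (P0 C) (flb C) (mlb C)" for t
    by (simp add: fs_def win_shift EH0_fs_lb[simplified] gl_def sum_subtractf diff_divide_distrib)
  show ?thesis unfolding Sx_def each using sig by (simp only: sum_divide_distrib[symmetric]) simp
qed

lemma S_sb:
  assumes j: "j \<le> Ksb C"
  shows "sqrt (Esb C j) * Sx n i j e
   = (\<Sum>t\<in>Tset (n div N) h s i. \<Sum>u=1..h div Lsb C. Gb j e ((h div Lsb C)*t+u))"
proof -
  obtain h' where h': "h = Lsb C * h'" using dvd(2) by (auto elim: dvdE)
  have hd: "h div Lsb C = h'" using h' pos by simp
  have Ep: "0 < Esb C j" using Esb_pos j by auto
  have idx: "\<And>u. u \<in> {1..h'} \<Longrightarrow> h*t + (Lsb C*(u-1)+1) = Lsb C*(h'*t+u-1)+1" for t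
    using h' by (intro idx_shift) auto
  have each: "fs C h j (\<lambda>k. e(h*t+k)) - EH0 (P0 C) (fs C h j)
     = (\<Sum>u=1..h'. Gb j e (h'*t+u)) / sqrt (Esb C j)" for t
  proof -
    have A: "fs C h j (\<lambda>k. e(h*t+k)) = (\<Sum>u=1..h'. if fsb C (win e (h*t + (Lsb C*(u-1)+1)) (Lsb C)) \<in> alpha C j then 1 else 0) / sqrt (Esb C j)"
      using j by (simp add: fs_def win_shift hd)
    have B: "(\<Sum>u=1..h'. if fsb C (win e (h*t + (Lsb C*(u-1)+1)) (Lsb C)) \<in> alpha C j then 1 else (0::real))
       = (\<Sum>u=1..h'. if fsb C (win e (Lsb C*(h'*t+u-1)+1) (Lsb C)) \<in> alpha C j then 1 else 0)"
      by (rule sum.cong[OF refl]) (simp only: idx)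
    have "fs C h j (\<lambda>k. e(h*t+k)) = (\<Sum>u=1..h'. if fsb C (win e (Lsb C*(h'*t+u-1)+1) (Lsb C)) \<in> alpha C j then 1 else 0) / sqrt (Esb C j)"
      using A B by simp
    then show ?thesis
      using j by (simp add: EH0_fs_sb hd Gb_def sum_subtractf diff_divide_distrib)
  qed
  show ?thesis unfolding Sx_def each hd using Ep by (simp only: sum_divide_distrib[symmetric]) simp
qed

lemma Tset_le: "t \<in> Tset (n div N) h s i \<Longrightarrow> i \<le> N \<Longrightarrow> h*t + s \<le> n"
proof -
  assume a: "t \<in> Tset (n div N) h s i" "i \<le> N"
  then have "h*t + s \<le> (n div N)*i" by (simp add: Tset_def)
  also have "\<dots> \<le> (n div N)*N" using a by simp
  also have "\<dots> \<le> n" by (simp add: mult.commute)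
  finally show ?thesis .
qed

lemma fs_meas:
  assumes t: "h*t + s \<le> n" and j: "j \<le> Ksb C + 2"
  shows "(\<lambda>w. fs C h j (\<lambda>k. eps n w (h*t+k))) \<in> borel_measurable (M n)"
proof -
  consider "j \<le> Ksb C" | "j = Ksb C + 1" | "\<not> j \<le> Ksb C" "j \<noteq> Ksb C + 1" by auto
  then show ?thesis
  proof cases
    case 1
    have m: "(\<lambda>w. if fsb C (win (eps n w) (h*t + (Lsb C*(u-1)+1)) (Lsb C)) \<in> alpha C j then 1 else 0::real) \<in> borel_measurable (M n)"
      if u: "u \<in> {1..h div Lsb C}" for u
    proof (rule ind_meas)
      obtain h' where h': "h = Lsb C * h'" using dvd(2) by (auto elim: dvdE)
      have "u \<le> h'" using u h' pos by simp
      then have "Lsb C * u \<le> h" using h' by simp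
      moreover have "Lsb C * u = Lsb C * (u - 1) + Lsb C" using u by (cases u) auto
      ultimately have r: "h*t + (Lsb C*(u-1)+1) + Lsb C \<le> n + 1" using t s_ge' by linarith
      show "(\<lambda>w. fsb C (win (eps n w) (h*t + (Lsb C*(u-1)+1)) (Lsb C))) \<in> borel_measurable (M n)"
        using measurable_comp[OF win_meas[OF _ r] meas_sb] by (simp add: comp_def)
      show "alpha C j \<in> sets borel" using alpha_b 1 by auto
    qed
    have "(\<lambda>w. fs C h j (\<lambda>k. eps n w (h*t+k))) = (\<lambda>w. (\<Sum>u=1..h div Lsb C. if fsb C (win (eps n w) (h*t + (Lsb C*(u-1)+1)) (Lsb C)) \<in> alpha C j then 1 else 0) / sqrt (Esb C j))"
      using 1 by (intro ext) (simp add: fs_def win_shift)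
    moreover have "\<dots> \<in> borel_measurable (M n)"
      by (intro borel_measurable_divide borel_measurable_sum m borel_measurable_const)
    ultimately show ?thesis by simp
  next
    case 2
    have m: "(\<lambda>w. flb C (win (eps n w) (h*t + u) (mlb C))) \<in> borel_measurable (M n)" if u: "u \<in> {1..h}" for u
    proof -
      have r: "h*t + u + mlb C \<le> n + 1" using u t s_ge' by auto
      show ?thesis using measurable_comp[OF win_meas[OF _ r] meas_lb] u by (simp add: comp_def)
    qed
    have "(\<lambda>w. fs C h j (\<lambda>k. eps n w (h*t+k))) = (\<lambda>w. (\<Sum>u=1..h. flb C (win (eps n w) (h*t + u) (mlb C))) / sigma (P0 C) (flb C) (mlb C))"
      using 2 by (intro ext) (simp add: fs_def win_shift)
    moreover have "\<dots> \<in> borel_measurable (M n)"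
      by (intro borel_measurable_divide borel_measurable_sum m borel_measurable_const)
    ultimately show ?thesis by simp
  next
    case 3
    have m: "(\<lambda>w. fsum C (win (eps n w) (h*t + u) (msum C))) \<in> borel_measurable (M n)" if u: "u \<in> {1..h}" for u
    proof -
      have r: "h*t + u + msum C \<le> n + 1" using u t s_ge' by auto
      show ?thesis using measurable_comp[OF win_meas[OF _ r] meas_sum] u by (simp add: comp_def)
    qed
    have "(\<lambda>w. fs C h j (\<lambda>k. eps n w (h*t+k))) = (\<lambda>w. (\<Sum>u=1..h. fsum C (win (eps n w) (h*t + u) (msum C))) / sigma (P0 C) (fsum C) (msum C))"
      using 3 by (intro ext) (simp add: fs_def win_shift)
    moreover have "\<dots> \<in> borel_measurable (M n)"
      by (intro borel_measurable_divide borel_measurable_sum m borel_measurable_const)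
    ultimately show ?thesis by simp
  qed
qed

lemma Zx_meas:
  assumes i: "i \<in> {1..N}" and j: "j \<le> Ksb C + 2"
  shows "Zx i j n \<in> borel_measurable (M n)"
proof -
  have "(\<lambda>w. Sx n i j (eps n w)) \<in> borel_measurable (M n)"
    unfolding Sx_def
    by (intro borel_measurable_sum borel_measurable_diff fs_meas measurable_const j)
       (use Tset_le i in auto)
  then have "(\<lambda>w. Sx n i j (eps n w) / real n) \<in> borel_measurable (M n)" by simp
  moreover have "Zx i j n = (\<lambda>w. Sx n i j (eps n w) / real n)" by (rule ext) (rule Zx_eq)
  ultimately show ?thesis by simp
qed

end

lemma nat_div_facts:
  fixes n N :: nat assumes "0 < N"
  shows "(n div N)*N \<le> n" "n < (n div N)*N + N"
proof -
  have e: "n = (n div N)*N + n mod N" by simp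
  have "n mod N < N" using assms by simp
  then show "(n div N)*N \<le> n" "n < (n div N)*N + N" using e by linarith+
qed

context LS begin

definition c0 where "c0 = N + s + 1"
definition cc where "cc = c0 + s + h"
definition RK where "RK = real ((N+1)*(2*cc+1))"

lemma Tsum_eq: "Tsum C n e = (\<Sum>p\<in>{1..n+1-msum C}. gs e p) / (sigma (P0 C) (fsum C) (msum C) * sqrt (real (n+1-msum C)))"
  by (simp add: Tsum_def gs_def)

lemma Sx_Zx: "0 < n \<Longrightarrow> real n * Zx i j n w = Sx n i j (eps n w)"
  by (simp add: Zx_eq)

lemma approx_sum:
  assumes w: "w \<in> space (M n)" and n: "0 < n"
  shows "\<bar>(\<Sum>p\<in>{1..n+1-msum C}. gs (eps n w) p)
     - sigma (P0 C) (fsum C) (msum C) * real n * (\<Sum>i\<in>{1..N}. Zx i (Ksb C + 2) n w)\<bar>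
     \<le> (max Bs 0 + \<bar>Emean (P0 C) (fsum C) (msum C)\<bar>) * RK"
proof -
  let ?e = "eps n w"
  let ?L = "n div N"
  have nf: "?L*N \<le> n" "n < ?L*N + N" using nat_div_facts[OF pos(5)] by auto
  have eq: "sigma (P0 C) (fsum C) (msum C) * real n * (\<Sum>i\<in>{1..N}. Zx i (Ksb C + 2) n w)
      = (\<Sum>i\<in>{0<..N}. \<Sum>t\<in>Tset ?L h s i. \<Sum>u=1..h div 1. gs ?e ((h div 1)*t+u))"
  proof -
    have "sigma (P0 C) (fsum C) (msum C) * real n * (\<Sum>i\<in>{1..N}. Zx i (Ksb C + 2) n w)
        = (\<Sum>i\<in>{1..N}. sigma (P0 C) (fsum C) (msum C) * (real n * Zx i (Ksb C + 2) n w))"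
      by (simp add: sum_distrib_left mult.assoc)
    also have "\<dots> = (\<Sum>i\<in>{1..N}. sigma (P0 C) (fsum C) (msum C) * Sx n i (Ksb C + 2) ?e)"
      using n by (simp add: Sx_Zx)
    also have "\<dots> = (\<Sum>i\<in>{1..N}. \<Sum>t\<in>Tset ?L h s i. \<Sum>u=1..h. gs ?e (h*t+u))"
      by (simp only: S_sum)
    finally have X: "sigma (P0 C) (fsum C) (msum C) * real n * (\<Sum>i\<in>{1..N}. Zx i (Ksb C + 2) n w)
       = (\<Sum>i\<in>{1..N}. \<Sum>t\<in>Tset ?L h s i. \<Sum>u=1..h. gs ?e (h*t+u))" .
    have eqset: "{1..N} = {0<..N}" by auto
    show ?thesis using X unfolding eqset by simp
  qed
  have "\<bar>(\<Sum>q\<in>{1..n+1-msum C}. gs ?e q) - (\<Sum>i\<in>{0<..N}. \<Sum>t\<in>Tset ?L h s i. \<Sum>u=1..h div 1. gs ?e ((h div 1)*t+u))\<bar>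
     \<le> (max Bs 0 + \<bar>Emean (P0 C) (fsum C) (msum C)\<bar>) * real ((N+1)*(2*cc+1))"
  proof (rule cover_bound[where ?c0.0 = c0])
    show "0 < h" "0 < (1::nat)" "1 dvd h" "h \<le> s" using pos s_ge' by auto
    show "cc = c0 + s + h" by (simp add: cc_def)
    show "N \<le> N" "0 \<le> N" by auto
    show "?L * 0 \<le> 1 * 1 + c0" "1 * 1 \<le> ?L * 0 + c0 + 1" by auto
    show "1 * (n + 1 - msum C) \<le> ?L * N + c0" using nf by (simp add: c0_def)
    show "?L * N \<le> 1 * (n + 1 - msum C + 1) + c0" using nf(1) s_ge' unfolding c0_def by arith
    show "0 \<le> max Bs 0 + \<bar>Emean (P0 C) (fsum C) (msum C)\<bar>" by simp
    show "\<forall>q\<in>{1..n + 1 - msum C} \<union> QG ?L h s 1 0 N. \<bar>gs ?e q\<bar> \<le> max Bs 0 + \<bar>Emean (P0 C) (fsum C) (msum C)\<bar>"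
    proof
      fix q assume q: "q \<in> {1..n + 1 - msum C} \<union> QG ?L h s 1 0 N"
      have "1 \<le> q \<and> q + msum C \<le> n + 1"
      proof (cases "q \<in> {1..n + 1 - msum C}")
        case True then show ?thesis using pos by auto
      next
        case False
        then have "q \<in> QG ?L h s 1 0 N" using q by auto
        from QG_range[OF this] have "1 \<le> q \<and> q + s \<le> ?L*N + h" by simp
        then show ?thesis using nf s_ge' by linarith
      qed
      then have "\<bar>gs ?e q\<bar> \<le> Bs + \<bar>Emean (P0 C) (fsum C) (msum C)\<bar>" using gs_bound[OF w] by auto
      then show "\<bar>gs ?e q\<bar> \<le> max Bs 0 + \<bar>Emean (P0 C) (fsum C) (msum C)\<bar>" by linarith
    qed
  qed
  then show ?thesis using eq unfolding RK_def by simp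
qed

lemma Wlb_eq:
  assumes k: "1 \<le> k" and m: "mlb C \<le> n div Nlb C"
  shows "Wlb C n e k - (real (n div Nlb C) - real (mlb C) + 1) * Emean (P0 C) (flb C) (mlb C)
    = (\<Sum>p\<in>{(n div Nlb C)*(k-1)+1..(n div Nlb C)*k+1-mlb C}. gl e p)"
proof -
  let ?L = "n div Nlb C"
  have Lk: "?L*k = ?L*(k-1) + ?L" using k by (cases k) auto
  have card: "card {?L*(k-1)+1..?L*k+1-mlb C} = ?L + 1 - mlb C" using Lk m by simp
  have r: "real (?L + 1 - mlb C) = real ?L - real (mlb C) + 1" using m by (simp add: of_nat_diff)
  let ?P = "{?L*(k-1)+1..?L*k+1-mlb C}"
  have A: "(\<Sum>p\<in>?P. gl e p) = (\<Sum>p\<in>?P. flb C (win e p (mlb C))) - real (card ?P) * Emean (P0 C) (flb C) (mlb C)"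
    by (simp add: gl_def sum_subtractf)
  have B: "Wlb C n e k = (\<Sum>p\<in>?P. flb C (win e p (mlb C)))" by (simp add: Wlb_def Let_def)
  show ?thesis unfolding A B card r by simp
qed

lemma wsb_eq: "real (wsb C n e j) - real (n div Lsb C) * Esb C j = (\<Sum>q\<in>{1..n div Lsb C}. Gb j e q)"
proof -
  let ?P = "\<lambda>i. fsb C (win e (Lsb C * (i - 1) + 1) (Lsb C)) \<in> alpha C j"
  have "real (wsb C n e j) = (\<Sum>i\<in>{i\<in>{1..n div Lsb C}. ?P i}. 1)" by (simp add: wsb_def)
  also have "\<dots> = (\<Sum>i\<in>{1..n div Lsb C}. if ?P i then 1 else 0)" by (rule sum.inter_filter) simp
  finally show ?thesis by (simp add: Gb_def sum_subtractf)
qed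

end

context LS begin

lemma approx_lb:
  assumes w: "w \<in> space (M n)" and n: "0 < n" and k: "1 \<le> k" "k \<le> Nlb C" and m: "mlb C \<le> n div Nlb C"
  shows "\<bar>(Wlb C n (eps n w) k - (real (n div Nlb C) - real (mlb C) + 1) * Emean (P0 C) (flb C) (mlb C))
     - sigma (P0 C) (flb C) (mlb C) * real n * (\<Sum>i\<in>{(N div Nlb C)*(k-1)<..(N div Nlb C)*k}. Zx i (Ksb C + 1) n w)\<bar>
     \<le> (max Bl 0 + \<bar>Emean (P0 C) (flb C) (mlb C)\<bar>) * RK"
proof -
  let ?e = "eps n w"
  define L where "L = n div N"
  define Ll where "Ll = n div Nlb C"
  define bb where "bb = N div Nlb C"
  have Nbb: "N = bb * Nlb C" using dvd(1) unfolding bb_def by auto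
  have nf: "L*N \<le> n" "n < L*N + N" using nat_div_facts[OF pos(5)] unfolding L_def by auto
  have "bb*L \<le> Ll" unfolding Ll_def using pos(3) nf Nbb
    by (subst less_eq_div_iff_mult_less_eq) (auto simp: algebra_simps)
  then have lo: "L*bb \<le> Ll" by (simp add: mult.commute)
  have "Ll < (L+1)*bb" unfolding Ll_def using pos(3) nf Nbb
    by (subst div_less_iff_less_mult) (auto simp: algebra_simps)
  then have hi: "Ll \<le> L*bb + bb" by (simp add: algebra_simps)
  have f1: "L*(bb*(k-1)) \<le> Ll*(k-1)" using mult_le_mono1[OF lo, of "k-1"] by (simp add: mult.assoc)
  have f2: "Ll*(k-1) \<le> L*(bb*(k-1)) + bb*(k-1)" using mult_le_mono1[OF hi, of "k-1"] by (simp add: algebra_simps)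
  have f3: "bb*k \<le> N" using k Nbb by simp
  have f3': "bb*(k-1) \<le> bb*k" by simp
  have f4: "L*(bb*k) \<le> Ll*k" using mult_le_mono1[OF lo, of k] by (simp add: mult.assoc)
  have f4': "Ll*k \<le> L*(bb*k) + bb*k" using mult_le_mono1[OF hi, of k] by (simp add: algebra_simps)
  have "Ll*Nlb C \<le> n" unfolding Ll_def by (simp add: nat_div_facts[OF pos(3)])
  then have f5: "Ll*k \<le> n" using k by (meson le_trans mult_le_mono2)
  have f6: "Ll*k = Ll*(k-1) + Ll" using k by (cases k) auto
  have f7: "L*(bb*k) \<le> L*N" using f3 by simp
  have m': "mlb C \<le> Ll" using m unfolding Ll_def .
  have eq: "sigma (P0 C) (flb C) (mlb C) * real n * (\<Sum>i\<in>{bb*(k-1)<..bb*k}. Zx i (Ksb C + 1) n w)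
      = (\<Sum>i\<in>{bb*(k-1)<..bb*k}. \<Sum>t\<in>Tset L h s i. \<Sum>u=1..h div 1. gl ?e ((h div 1)*t+u))"
  proof -
    have "sigma (P0 C) (flb C) (mlb C) * real n * (\<Sum>i\<in>{bb*(k-1)<..bb*k}. Zx i (Ksb C + 1) n w)
        = (\<Sum>i\<in>{bb*(k-1)<..bb*k}. sigma (P0 C) (flb C) (mlb C) * (real n * Zx i (Ksb C + 1) n w))"
      by (simp add: sum_distrib_left mult.assoc)
    also have "\<dots> = (\<Sum>i\<in>{bb*(k-1)<..bb*k}. sigma (P0 C) (flb C) (mlb C) * Sx n i (Ksb C + 1) ?e)"
      using n by (simp add: Sx_Zx)
    also have "\<dots> = (\<Sum>i\<in>{bb*(k-1)<..bb*k}. \<Sum>t\<in>Tset L h s i. \<Sum>u=1..h. gl ?e (h*t+u))"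
      unfolding L_def by (simp only: S_lb)
    finally show ?thesis by simp
  qed
  have "\<bar>(\<Sum>q\<in>{Ll*(k-1)+1..Ll*k+1-mlb C}. gl ?e q) - (\<Sum>i\<in>{bb*(k-1)<..bb*k}. \<Sum>t\<in>Tset L h s i. \<Sum>u=1..h div 1. gl ?e ((h div 1)*t+u))\<bar>
     \<le> (max Bl 0 + \<bar>Emean (P0 C) (flb C) (mlb C)\<bar>) * real ((N+1)*(2*cc+1))"
  proof (rule cover_bound[where ?c0.0 = c0])
    show "0 < h" "0 < (1::nat)" "1 dvd h" "h \<le> s" using pos s_ge' by auto
    show "cc = c0 + s + h" by (simp add: cc_def)
    show "bb*k \<le> N" "bb*(k-1) \<le> bb*k" using f3 f3' .
    show "L * (bb*(k-1)) \<le> 1 * (Ll*(k-1)+1) + c0" using f1 by (simp only: mult_1_left)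
    show "1 * (Ll*(k-1)+1) \<le> L * (bb*(k-1)) + c0 + 1" using f2 f3 f3' unfolding c0_def by (simp only: mult_1_left; linarith)
    show "1 * (Ll*k+1-mlb C) \<le> L * (bb*k) + c0" using f4' f3 unfolding c0_def by arith
    show "L * (bb*k) \<le> 1 * (Ll*k+1-mlb C + 1) + c0" using f4 s_ge' unfolding c0_def by arith
    show "0 \<le> max Bl 0 + \<bar>Emean (P0 C) (flb C) (mlb C)\<bar>" by simp
    show "\<forall>q\<in>{Ll*(k-1)+1..Ll*k+1-mlb C} \<union> QG L h s 1 (bb*(k-1)) (bb*k). \<bar>gl ?e q\<bar> \<le> max Bl 0 + \<bar>Emean (P0 C) (flb C) (mlb C)\<bar>"
    proof
      fix q assume q: "q \<in> {Ll*(k-1)+1..Ll*k+1-mlb C} \<union> QG L h s 1 (bb*(k-1)) (bb*k)"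
      have "1 \<le> q \<and> q + mlb C \<le> n + 1"
      proof (cases "q \<in> {Ll*(k-1)+1..Ll*k+1-mlb C}")
        case True then show ?thesis using f5 f6 m' by auto
      next
        case False
        then have "q \<in> QG L h s 1 (bb*(k-1)) (bb*k)" using q by auto
        from QG_range[OF this] have "1 \<le> q \<and> q + s \<le> L*(bb*k) + h" by simp
        then show ?thesis using nf f7 s_ge' by linarith
      qed
      then have "\<bar>gl ?e q\<bar> \<le> Bl + \<bar>Emean (P0 C) (flb C) (mlb C)\<bar>" using gl_bound[OF w] by auto
      then show "\<bar>gl ?e q\<bar> \<le> max Bl 0 + \<bar>Emean (P0 C) (flb C) (mlb C)\<bar>" by linarith
    qed
  qed
  then show ?thesis using eq Wlb_eq[OF k(1) m, of ?e] unfolding RK_def Ll_def bb_def by simp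
qed

lemma approx_sb:
  assumes w: "w \<in> space (M n)" and n: "0 < n" and j: "j \<le> Ksb C"
  shows "\<bar>(real (wsb C n (eps n w) j) - real (n div Lsb C) * Esb C j)
     - sqrt (Esb C j) * real n * (\<Sum>i\<in>{1..N}. Zx i j n w)\<bar> \<le> 1 * RK"
proof -
  let ?e = "eps n w"
  define L where "L = n div N"
  have nf: "L*N \<le> n" "n < L*N + N" using nat_div_facts[OF pos(5)] unfolding L_def by auto
  have sf: "(n div Lsb C)*Lsb C \<le> n" "n < (n div Lsb C)*Lsb C + Lsb C" using nat_div_facts[OF pos(4)] by auto
  have eq: "sqrt (Esb C j) * real n * (\<Sum>i\<in>{1..N}. Zx i j n w)
      = (\<Sum>i\<in>{0<..N}. \<Sum>t\<in>Tset L h s i. \<Sum>u=1..h div Lsb C. Gb j ?e ((h div Lsb C)*t+u))"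
  proof -
    have "sqrt (Esb C j) * real n * (\<Sum>i\<in>{1..N}. Zx i j n w)
        = (\<Sum>i\<in>{1..N}. sqrt (Esb C j) * (real n * Zx i j n w))"
      by (simp add: sum_distrib_left mult.assoc)
    also have "\<dots> = (\<Sum>i\<in>{1..N}. sqrt (Esb C j) * Sx n i j ?e)"
      using n by (simp add: Sx_Zx)
    also have "\<dots> = (\<Sum>i\<in>{1..N}. \<Sum>t\<in>Tset L h s i. \<Sum>u=1..h div Lsb C. Gb j ?e ((h div Lsb C)*t+u))"
      unfolding L_def using S_sb[OF j] by simp
    finally have X: "sqrt (Esb C j) * real n * (\<Sum>i\<in>{1..N}. Zx i j n w)
      = (\<Sum>i\<in>{1..N}. \<Sum>t\<in>Tset L h s i. \<Sum>u=1..h div Lsb C. Gb j ?e ((h div Lsb C)*t+u))" .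
    have eqset: "{1..N} = {0<..N}" by auto
    show ?thesis using X unfolding eqset by simp
  qed
  have "\<bar>(\<Sum>q\<in>{1..n div Lsb C}. Gb j ?e q) - (\<Sum>i\<in>{0<..N}. \<Sum>t\<in>Tset L h s i. \<Sum>u=1..h div Lsb C. Gb j ?e ((h div Lsb C)*t+u))\<bar>
     \<le> 1 * real ((N+1)*(2*cc+1))"
  proof (rule cover_bound[where ?c0.0 = c0])
    show "0 < h" "0 < Lsb C" "Lsb C dvd h" "h \<le> s" using pos s_ge' dvd by auto
    show "cc = c0 + s + h" by (simp add: cc_def)
    show "N \<le> N" "0 \<le> N" by auto
    show "L * 0 \<le> Lsb C * 1 + c0" "Lsb C * 1 \<le> L * 0 + c0 + Lsb C" by auto
    have sf1: "Lsb C * (n div Lsb C) \<le> n" using sf(1) by (simp add: mult.commute)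
    then show "Lsb C * (n div Lsb C) \<le> L * N + c0" using nf unfolding c0_def by linarith
    show "L * N \<le> Lsb C * (n div Lsb C + 1) + c0" using nf sf unfolding c0_def by (simp add: algebra_simps)
    show "0 \<le> (1::real)" by simp
    show "\<forall>q\<in>{1..n div Lsb C} \<union> QG L h s (Lsb C) 0 N. \<bar>Gb j ?e q\<bar> \<le> 1"
      using Gb_bound[OF j] by auto
  qed
  then show ?thesis using eq wsb_eq[of n ?e j] unfolding RK_def by simp
qed

end

lemma aux1: fixes A X V R :: real shows "A/2 \<le> X \<Longrightarrow> \<bar>V - X\<bar> \<le> R \<Longrightarrow> R \<le> A/4 \<Longrightarrow> A/4 \<le> V"
  unfolding abs_le_iff by linarith
lemma aux2: fixes A X V R :: real shows "A/2 \<le> \<bar>X\<bar> \<Longrightarrow> \<bar>V - X\<bar> \<le> R \<Longrightarrow> R \<le> A/4 \<Longrightarrow> A/4 \<le> \<bar>V\<bar>"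
proof -
  assume a: "A/2 \<le> \<bar>X\<bar>" "\<bar>V - X\<bar> \<le> R" "R \<le> A/4"
  have "\<bar>X\<bar> \<le> \<bar>V\<bar> + \<bar>X - V\<bar>" using abs_triangle_ineq[of V "X - V"] by simp
  moreover have "\<bar>X - V\<bar> = \<bar>V - X\<bar>" by (rule abs_minus_commute)
  ultimately show ?thesis using a by linarith
qed

lemma final_lin:
  fixes \<kappa> c R :: real
  assumes M: "\<And>n. prob_space (M n)" and Zm: "\<And>n. Z n \<in> borel_measurable (M n)"
    and cv: "cvg_prob M Z c" and c: "0 < c" and k: "0 < \<kappa>"
    and ap: "\<forall>\<^sub>F n in sequentially. \<forall>w\<in>space (M n). \<bar>V n w - \<kappa> * real n * Z n w\<bar> \<le> R"
    and Y: "\<forall>\<^sub>F n in sequentially. \<forall>w\<in>space (M n). 0 < V n w \<longrightarrow> V n w / (\<kappa> * sqrt (real n)) \<le> Y n w"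
  shows "cvg_prob_pinf M Y"
proof (rule pinf_crit[OF M Zm cv, of "c/2" "\<lambda>n. c/4 * sqrt (real n)"])
  show "0 < c/2" using c by simp
  show "filterlim (\<lambda>n. c/4 * sqrt (real n)) at_top sequentially"
    by (rule filterlim_tendsto_pos_mult_at_top[OF tendsto_const])
       (use c filterlim_compose[OF sqrt_at_top filterlim_real_sequentially] in auto)
  have big: "\<forall>\<^sub>F n in sequentially. max 1 (4 * R / (\<kappa> * c)) \<le> real n"
    using filterlim_real_sequentially[unfolded filterlim_at_top] by blast
  show "\<forall>\<^sub>F n in sequentially. \<forall>w\<in>space (M n). \<bar>Z n w - c\<bar> \<le> c / 2 \<longrightarrow> c / 4 * sqrt (real n) \<le> Y n w"
    using ap Y big
  proof eventually_elim
    case (elim n)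
    show ?case
    proof (intro ballI impI)
      fix w assume w: "w \<in> space (M n)" and z: "\<bar>Z n w - c\<bar> \<le> c / 2"
      have n0: "0 < real n" using elim(3) by linarith
      have Rb: "R \<le> \<kappa> * real n * c / 4"
      proof -
        have "4 * R / (\<kappa> * c) \<le> real n" using elim(3) by simp
        then have "4 * R \<le> real n * (\<kappa> * c)" using k c by (simp add: divide_le_eq)
        then show ?thesis by (simp add: algebra_simps)
      qed
      have Zc: "c/2 \<le> Z n w" using z by linarith
      have "\<kappa> * real n * (c/2) \<le> \<kappa> * real n * Z n w"
        using Zc k n0 by (intro mult_left_mono) auto
      moreover have a: "\<bar>V n w - \<kappa> * real n * Z n w\<bar> \<le> R" using elim(1) w by blast
      ultimately have V: "\<kappa> * real n * c / 4 \<le> V n w" using Rb aux1[of "\<kappa> * real n * c" "\<kappa> * real n * Z n w" "V n w" R] by simp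
      have "0 < \<kappa> * real n * c / 4" using k n0 c by simp
      then have Vp: "0 < V n w" using V by linarith
      have sq: "0 < sqrt (real n)" using n0 by simp
      have "c / 4 * sqrt (real n) = (\<kappa> * real n * c / 4) / (\<kappa> * sqrt (real n))"
        using k sq real_div_sqrt[of "real n"] by (simp add: field_simps)
      also have "\<dots> \<le> V n w / (\<kappa> * sqrt (real n))"
        using V k sq by (intro divide_right_mono) auto
      also have "\<dots> \<le> Y n w" using elim(2) w Vp by auto
      finally show "c / 4 * sqrt (real n) \<le> Y n w" .
    qed
  qed
qed

lemma final_sq:
  fixes \<kappa> c R :: real
  assumes M: "\<And>n. prob_space (M n)" and Zm: "\<And>n. Z n \<in> borel_measurable (M n)"
    and cv: "cvg_prob M Z c" and c: "c \<noteq> 0" and k: "0 < \<kappa>"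
    and ap: "\<forall>\<^sub>F n in sequentially. \<forall>w\<in>space (M n). \<bar>V n w - \<kappa> * real n * Z n w\<bar> \<le> R"
    and Y: "\<forall>\<^sub>F n in sequentially. 0 < D n \<and> D n \<le> real n \<and> (\<forall>w\<in>space (M n). (V n w)\<^sup>2 / (D n * \<kappa>\<^sup>2) \<le> Y n w)"
  shows "cvg_prob_pinf M Y"
proof (rule pinf_crit[OF M Zm cv, of "\<bar>c\<bar>/2" "\<lambda>n. c\<^sup>2/16 * real n"])
  show "0 < \<bar>c\<bar>/2" using c by simp
  show "filterlim (\<lambda>n. c\<^sup>2/16 * real n) at_top sequentially"
    by (rule filterlim_tendsto_pos_mult_at_top[OF tendsto_const]) (use c filterlim_real_sequentially in auto)
  have big: "\<forall>\<^sub>F n in sequentially. max 1 (4 * R / (\<kappa> * \<bar>c\<bar>)) \<le> real n"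
    using filterlim_real_sequentially[unfolded filterlim_at_top] by blast
  show "\<forall>\<^sub>F n in sequentially. \<forall>w\<in>space (M n). \<bar>Z n w - c\<bar> \<le> \<bar>c\<bar> / 2 \<longrightarrow> c\<^sup>2/16 * real n \<le> Y n w"
    using ap Y big
  proof eventually_elim
    case (elim n)
    show ?case
    proof (intro ballI impI)
      fix w assume w: "w \<in> space (M n)" and z: "\<bar>Z n w - c\<bar> \<le> \<bar>c\<bar> / 2"
      have ac: "0 < \<bar>c\<bar>" using c by simp
      have n0: "0 < real n" using elim(3) by linarith
      have Rb: "R \<le> \<kappa> * real n * \<bar>c\<bar> / 4"
      proof -
        have "4 * R / (\<kappa> * \<bar>c\<bar>) \<le> real n" using elim(3) by simp
        then have "4 * R \<le> real n * (\<kappa> * \<bar>c\<bar>)" using k ac by (simp add: divide_le_eq)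
        then show ?thesis by (simp add: algebra_simps)
      qed
      have Zc: "\<bar>c\<bar>/2 \<le> \<bar>Z n w\<bar>" using z by linarith
      have "\<kappa> * real n * (\<bar>c\<bar>/2) \<le> \<kappa> * real n * \<bar>Z n w\<bar>"
        using Zc k n0 by (intro mult_left_mono) auto
      also have "\<kappa> * real n * \<bar>Z n w\<bar> = \<bar>\<kappa> * real n * Z n w\<bar>" using k n0 by (simp add: abs_mult)
      finally have "\<kappa> * real n * (\<bar>c\<bar>/2) \<le> \<bar>\<kappa> * real n * Z n w\<bar>" .
      moreover have a: "\<bar>V n w - \<kappa> * real n * Z n w\<bar> \<le> R" using elim(1) w by blast
      ultimately have V: "\<kappa> * real n * \<bar>c\<bar> / 4 \<le> \<bar>V n w\<bar>" using Rb aux2[of "\<kappa> * real n * \<bar>c\<bar>" "\<kappa> * real n * Z n w" "V n w" R] by simp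
      have q0: "0 \<le> \<kappa> * real n * \<bar>c\<bar> / 4" using k n0 ac by simp
      have "(\<kappa> * real n * \<bar>c\<bar> / 4)\<^sup>2 \<le> (\<bar>V n w\<bar>)\<^sup>2" using V q0 by (rule power_mono)
      then have V2: "\<kappa>\<^sup>2 * (real n)\<^sup>2 * c\<^sup>2 / 16 \<le> (V n w)\<^sup>2" by (simp add: power_mult_distrib power_divide)
      have D0: "0 < D n" "D n \<le> real n" using elim(2) by auto
      have kk: "0 < \<kappa>\<^sup>2" using k by simp
      have "c\<^sup>2/16 * real n = (\<kappa>\<^sup>2 * (real n)\<^sup>2 * c\<^sup>2 / 16) / (real n * \<kappa>\<^sup>2)"
        using n0 kk k by (simp add: field_simps power2_eq_square)
      also have "\<dots> \<le> (\<kappa>\<^sup>2 * (real n)\<^sup>2 * c\<^sup>2 / 16) / (D n * \<kappa>\<^sup>2)"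
        using D0 kk by (intro divide_left_mono mult_right_mono mult_pos_pos) auto
      also have "\<dots> \<le> (V n w)\<^sup>2 / (D n * \<kappa>\<^sup>2)"
        using V2 D0 kk by (intro divide_right_mono) auto
      also have "\<dots> \<le> Y n w" using elim(2) w by auto
      finally show "c\<^sup>2/16 * real n \<le> Y n w" .
    qed
  qed
qed

context LS begin

lemma Zx_fun: "(\<lambda>n w. Xcal C N s h n i j (eps n w) / sqrt (real n)) = Zx i j"
  by (intro ext) (simp add: Zx_def)

lemma cv_group:
  assumes conv: "\<forall>i\<in>{1..N}. \<forall>j\<le>Ksb C + 2. cvg_prob M (\<lambda>n w. Xcal C N s h n i j (eps n w) / sqrt (real n)) (x i j)"
    and I: "I \<subseteq> {1..N}" and j: "j \<le> Ksb C + 2"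
  shows "cvg_prob M (\<lambda>n w. \<Sum>i\<in>I. Zx i j n w) (\<Sum>i\<in>I. x i j)"
proof (rule cvg_prob_sum)
  show "\<And>n. prob_space (M n)" using scheme(1) by auto
  show "finite I" using I finite_subset by blast
  show "\<And>i n. i \<in> I \<Longrightarrow> Zx i j n \<in> borel_measurable (M n)" using Zx_meas I j by auto
  show "\<And>i. i \<in> I \<Longrightarrow> cvg_prob M (Zx i j) (x i j)" using conv I j Zx_fun by auto
qed

lemma Zsum_meas: "I \<subseteq> {1..N} \<Longrightarrow> j \<le> Ksb C + 2 \<Longrightarrow> (\<lambda>w. \<Sum>i\<in>I. Zx i j n w) \<in> borel_measurable (M n)"
  by (intro borel_measurable_sum) (use Zx_meas in auto)

lemma Tsum_Y:
  assumes n: "msum C \<le> n" and V: "0 < V"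
  shows "V / (sigma (P0 C) (fsum C) (msum C) * sqrt (real n))
      \<le> V / (sigma (P0 C) (fsum C) (msum C) * sqrt (real (n + 1 - msum C)))"
proof -
  have a: "real (n + 1 - msum C) \<le> real n" "0 < real (n + 1 - msum C)" using n pos(1) by auto
  show ?thesis using a sig V
    by (intro divide_left_mono mult_left_mono mult_pos_pos) auto
qed

lemma res_sum:
  assumes conv: "\<forall>i\<in>{1..N}. \<forall>j\<le>Ksb C + 2. cvg_prob M (\<lambda>n w. Xcal C N s h n i j (eps n w) / sqrt (real n)) (x i j)"
  shows "0 < (\<Sum>i\<in>{1..N}. x i (Ksb C + 2)) \<longrightarrow> cvg_prob_pinf M (\<lambda>n w. Tsum C n (eps n w))"
    and "(\<Sum>i\<in>{1..N}. x i (Ksb C + 2)) < 0 \<longrightarrow> cvg_prob_minf M (\<lambda>n w. Tsum C n (eps n w))"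
proof -
  let ?Z = "\<lambda>n w. \<Sum>i\<in>{1..N}. Zx i (Ksb C + 2) n w"
  let ?V = "\<lambda>n w. \<Sum>p\<in>{1..n+1-msum C}. gs (eps n w) p"
  let ?k = "sigma (P0 C) (fsum C) (msum C)"
  let ?R = "(max Bs 0 + \<bar>Emean (P0 C) (fsum C) (msum C)\<bar>) * RK"
  let ?c = "\<Sum>i\<in>{1..N}. x i (Ksb C + 2)"
  have M: "\<And>n. prob_space (M n)" using scheme(1) by auto
  have Zm: "\<And>n. ?Z n \<in> borel_measurable (M n)" by (rule Zsum_meas) auto
  have cv: "cvg_prob M ?Z ?c" by (rule cv_group[OF conv]) auto
  have ap: "\<forall>\<^sub>F n in sequentially. \<forall>w\<in>space (M n). \<bar>?V n w - ?k * real n * ?Z n w\<bar> \<le> ?R"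
    using eventually_gt_at_top[of 0] by eventually_elim (use approx_sum in auto)
  have evm: "\<forall>\<^sub>F n in sequentially. msum C \<le> n" by (rule eventually_ge_at_top)
  show "0 < ?c \<longrightarrow> cvg_prob_pinf M (\<lambda>n w. Tsum C n (eps n w))"
  proof
    assume c: "0 < ?c"
    show "cvg_prob_pinf M (\<lambda>n w. Tsum C n (eps n w))"
    proof (rule final_lin[OF M Zm cv c sig(1) ap])
      show "\<forall>\<^sub>F n in sequentially. \<forall>w\<in>space (M n). 0 < ?V n w \<longrightarrow> ?V n w / (?k * sqrt (real n)) \<le> Tsum C n (eps n w)"
        using evm
      proof eventually_elim
        case (elim n)
        show ?case
        proof (intro ballI impI)
          fix w assume "0 < ?V n w"
          from Tsum_Y[OF elim this] show "?V n w / (?k * sqrt (real n)) \<le> Tsum C n (eps n w)"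
            by (simp only: Tsum_eq)
        qed
      qed
    qed
  qed
  show "?c < 0 \<longrightarrow> cvg_prob_minf M (\<lambda>n w. Tsum C n (eps n w))"
  proof
    assume c: "?c < 0"
    have "cvg_prob_pinf M (\<lambda>n w. - Tsum C n (eps n w))"
    proof (rule final_lin[where V="\<lambda>n w. - ?V n w" and Z="\<lambda>n w. - ?Z n w" and c="- ?c" and \<kappa>="?k" and R="?R"])
      show "\<And>n. prob_space (M n)" by (rule M)
      show "\<And>n. (\<lambda>w. - ?Z n w) \<in> borel_measurable (M n)" using Zm by simp
      show "cvg_prob M (\<lambda>n w. - ?Z n w) (- ?c)" by (rule cvg_prob_neg[OF cv])
      show "0 < - ?c" using c by simp
      show "0 < ?k" by (rule sig(1))
      show "\<forall>\<^sub>F n in sequentially. \<forall>w\<in>space (M n). \<bar>- ?V n w - ?k * real n * - ?Z n w\<bar> \<le> ?R"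
        using ap by eventually_elim (simp add: abs_minus_commute)
      show "\<forall>\<^sub>F n in sequentially. \<forall>w\<in>space (M n). 0 < - ?V n w \<longrightarrow> - ?V n w / (?k * sqrt (real n)) \<le> - Tsum C n (eps n w)"
        using evm
      proof eventually_elim
        case (elim n)
        show ?case
        proof (intro ballI impI)
          fix w assume "0 < - ?V n w"
          from Tsum_Y[OF elim this] show "- ?V n w / (?k * sqrt (real n)) \<le> - Tsum C n (eps n w)"
            by (simp only: Tsum_eq minus_divide_left)
        qed
      qed
    qed
    then show "cvg_prob_minf M (\<lambda>n w. Tsum C n (eps n w))" by (rule minf_of_pinf)
  qed
qed


lemma res_lb:
  assumes conv: "\<forall>i\<in>{1..N}. \<forall>j\<le>Ksb C + 2. cvg_prob M (\<lambda>n w. Xcal C N s h n i j (eps n w) / sqrt (real n)) (x i j)"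
    and k0: "1 \<le> k0" "k0 \<le> Nlb C"
    and c: "(\<Sum>i\<in>{(N div Nlb C)*(k0-1)<..(N div Nlb C)*k0}. x i (Ksb C + 1)) \<noteq> 0"
  shows "cvg_prob_pinf M (\<lambda>n w. Tlb C n (eps n w))"
proof -
  define bb where "bb = N div Nlb C"
  let ?I = "{bb*(k0-1)<..bb*k0}"
  let ?Z = "\<lambda>n w. \<Sum>i\<in>?I. Zx i (Ksb C + 1) n w"
  let ?V = "\<lambda>n w. Wlb C n (eps n w) k0 - (real (n div Nlb C) - real (mlb C) + 1) * Emean (P0 C) (flb C) (mlb C)"
  let ?k = "sigma (P0 C) (flb C) (mlb C)"
  let ?R = "(max Bl 0 + \<bar>Emean (P0 C) (flb C) (mlb C)\<bar>) * RK"
  let ?c = "\<Sum>i\<in>?I. x i (Ksb C + 1)"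
  have Nbb: "N = bb * Nlb C" using dvd(1) unfolding bb_def by auto
  have I: "?I \<subseteq> {1..N}"
  proof
    fix i assume "i \<in> ?I"
    then have "1 \<le> i" "i \<le> bb*k0" by auto
    moreover have "bb*k0 \<le> N" using Nbb k0 by simp
    ultimately show "i \<in> {1..N}" by simp
  qed
  have M: "\<And>n. prob_space (M n)" using scheme(1) by auto
  have Zm: "\<And>n. ?Z n \<in> borel_measurable (M n)" by (rule Zsum_meas[OF I]) auto
  have cv: "cvg_prob M ?Z ?c" by (rule cv_group[OF conv I]) auto
  have evn: "\<forall>\<^sub>F n in sequentially. Nlb C * (mlb C + 1) \<le> n" by (rule eventually_ge_at_top)
  have big: "mlb C + 1 \<le> n div Nlb C" "0 < n" if "Nlb C * (mlb C + 1) \<le> n" for n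
  proof -
    show "mlb C + 1 \<le> n div Nlb C" using that pos(3)
      by (subst less_eq_div_iff_mult_less_eq) (auto simp: mult.commute)
    show "0 < n" using that pos(3) by (metis add_gr_0 less_numeral_extra(1) mult_pos_pos order_less_le_trans)
  qed
  have ap: "\<forall>\<^sub>F n in sequentially. \<forall>w\<in>space (M n). \<bar>?V n w - ?k * real n * ?Z n w\<bar> \<le> ?R"
    using evn
  proof eventually_elim
    case (elim n)
    have m: "mlb C \<le> n div Nlb C" using big(1)[OF elim] by simp
    show ?case using approx_lb[OF _ big(2)[OF elim] k0 m] unfolding bb_def by auto
  qed
  show ?thesis
  proof (rule final_sq[OF M Zm cv c[folded bb_def] sig(2) ap, where D="\<lambda>n. real (n div Nlb C)"])
    show "\<forall>\<^sub>F n in sequentially. 0 < real (n div Nlb C) \<and> real (n div Nlb C) \<le> real n \<and>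
        (\<forall>w\<in>space (M n). (?V n w)\<^sup>2 / (real (n div Nlb C) * ?k\<^sup>2) \<le> Tlb C n (eps n w))"
      using evn
    proof eventually_elim
      case (elim n)
      have p: "0 < real (n div Nlb C)" using big(1)[OF elim] by simp
      have q: "real (n div Nlb C) \<le> real n" by simp
      have r: "(?V n w)\<^sup>2 / (real (n div Nlb C) * ?k\<^sup>2) \<le> Tlb C n (eps n w)" for w
      proof -
        let ?f = "\<lambda>k. (Wlb C n (eps n w) k - (real (n div Nlb C) - real (mlb C) + 1) * Emean (P0 C) (flb C) (mlb C))\<^sup>2
            / (real (n div Nlb C) * (sigma (P0 C) (flb C) (mlb C))\<^sup>2)"
        have "?f k0 \<le> sum ?f {1..Nlb C}"
          by (rule member_le_sum) (use k0 in auto)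
        then show ?thesis unfolding Tlb_def Let_def by simp
      qed
      show ?case using p q r by auto
    qed
  qed
qed

lemma res_sb:
  assumes conv: "\<forall>i\<in>{1..N}. \<forall>j\<le>Ksb C + 2. cvg_prob M (\<lambda>n w. Xcal C N s h n i j (eps n w) / sqrt (real n)) (x i j)"
    and j0: "j0 \<le> Ksb C"
    and c: "(\<Sum>i\<in>{1..N}. x i j0) \<noteq> 0"
  shows "cvg_prob_pinf M (\<lambda>n w. Tsb C n (eps n w))"
proof -
  let ?Z = "\<lambda>n w. \<Sum>i\<in>{1..N}. Zx i j0 n w"
  let ?V = "\<lambda>n w. real (wsb C n (eps n w) j0) - real (n div Lsb C) * Esb C j0"
  let ?k = "sqrt (Esb C j0)"
  let ?R = "1 * RK"
  have E: "0 < Esb C j0" using Esb_pos j0 by auto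
  have M: "\<And>n. prob_space (M n)" using scheme(1) by auto
  have Zm: "\<And>n. ?Z n \<in> borel_measurable (M n)" by (rule Zsum_meas) (use j0 in auto)
  have cv: "cvg_prob M ?Z (\<Sum>i\<in>{1..N}. x i j0)" by (rule cv_group[OF conv]) (use j0 in auto)
  have k: "0 < ?k" using E by simp
  have evn: "\<forall>\<^sub>F n in sequentially. Lsb C \<le> n" by (rule eventually_ge_at_top)
  have ap: "\<forall>\<^sub>F n in sequentially. \<forall>w\<in>space (M n). \<bar>?V n w - ?k * real n * ?Z n w\<bar> \<le> ?R"
    using evn
  proof eventually_elim
    case (elim n)
    have "0 < n" using elim pos(4) by linarith
    then show ?case using approx_sb[OF _ _ j0] by auto
  qed
  show ?thesis
  proof (rule final_sq[OF M Zm cv c k ap, where D="\<lambda>n. real (n div Lsb C)"])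
    show "\<forall>\<^sub>F n in sequentially. 0 < real (n div Lsb C) \<and> real (n div Lsb C) \<le> real n \<and>
        (\<forall>w\<in>space (M n). (?V n w)\<^sup>2 / (real (n div Lsb C) * ?k\<^sup>2) \<le> Tsb C n (eps n w))"
      using evn
    proof eventually_elim
      case (elim n)
      have p: "0 < real (n div Lsb C)" using elim pos(4) by (simp add: div_greater_zero_iff)
      have q: "real (n div Lsb C) \<le> real n" by simp
      have r: "(?V n w)\<^sup>2 / (real (n div Lsb C) * ?k\<^sup>2) \<le> Tsb C n (eps n w)" for w
      proof -
        let ?f = "\<lambda>j. (real (wsb C n (eps n w) j) - real (n div Lsb C) * Esb C j)\<^sup>2 / (real (n div Lsb C) * Esb C j)"
        have nn: "0 \<le> ?f j" if "j \<in> {0..Ksb C}" for j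
          using Esb_pos that by (intro divide_nonneg_nonneg mult_nonneg_nonneg) (auto simp: less_imp_le)
        have "?f j0 \<le> sum ?f {0..Ksb C}"
          by (rule member_le_sum) (use j0 nn in auto)
        moreover have "?k\<^sup>2 = Esb C j0" using E by simp
        ultimately show ?thesis unfolding Tsb_def Let_def by simp
      qed
      show ?case using p q r by auto
    qed
  qed
qed

end

theorem lemma1:
  fixes C :: "('a::euclidean_space) cfg"
    and Xset :: "'a set"
    and N s h :: nat
    and M :: "nat \<Rightarrow> 'b measure"
    and eps :: "nat \<Rightarrow> 'b \<Rightarrow> nat \<Rightarrow> 'a"
    and x :: "nat \<Rightarrow> nat \<Rightarrow> real"
  defines "XM \<equiv> restrict_space borel Xset"
  assumes P0: "prob_space (P0 C)" "sets (P0 C) = sets XM"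
    and pos: "0 < msum C" "0 < mlb C" "0 < Nlb C" "0 < Lsb C" "0 < Ksb C" "0 < N" "0 < h"
    and meas_sum: "fsum C \<in> borel_measurable (PiM {..<msum C} (\<lambda>_. XM))"
    and meas_lb: "flb C \<in> borel_measurable (PiM {..<mlb C} (\<lambda>_. XM))"
    and meas_sb: "fsb C \<in> borel_measurable (PiM {..<Lsb C} (\<lambda>_. XM))"
    and bdd_sum: "\<exists>B. \<forall>\<theta>\<in>space (PiM {..<msum C} (\<lambda>_. XM)). \<bar>fsum C \<theta>\<bar> \<le> B"
    and bdd_lb: "\<exists>B. \<forall>\<theta>\<in>space (PiM {..<mlb C} (\<lambda>_. XM)). \<bar>flb C \<theta>\<bar> \<le> B"
    and alpha: "\<forall>j\<le>Ksb C. alpha C j \<in> sets borel \<and> alpha C j \<noteq> {}"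
      "disjoint_family_on (alpha C) {0..Ksb C}"
      "(\<Union>j\<le>Ksb C. alpha C j) = fsb C ` space (PiM {..<Lsb C} (\<lambda>_. XM))"
    and sig: "0 < sigma (P0 C) (fsum C) (msum C)" "0 < sigma (P0 C) (flb C) (mlb C)"
    and Esb_pos: "\<forall>j\<le>Ksb C. 0 < Esb C j"
    and s_ge: "s \<ge> h + max (msum C) (mlb C) - 1"
    and dvd: "Nlb C dvd N" "Lsb C dvd h"
    and scheme: "\<forall>n. prob_space (M n)"
      "\<forall>n. \<forall>i\<in>{1..n}. (\<lambda>w. eps n w i) \<in> measurable (M n) XM"
    and conv: "\<forall>i\<in>{1..N}. \<forall>j\<le>Ksb C + 2.
        cvg_prob M (\<lambda>n w. Xcal C N s h n i j (eps n w) / sqrt (real n)) (x i j)"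
  shows
    "let y = (\<lambda>k j. \<Sum>i=1..N div Nlb C. x (N div Nlb C * (k - 1) + i) j);
         c_sum = (\<Sum>k=1..Nlb C. y k (Ksb C + 2));
         c_lb = (\<Sum>k=1..Nlb C. (y k (Ksb C + 1))\<^sup>2);
         c_sb = (\<Sum>j=0..Ksb C. (\<Sum>k=1..Nlb C. y k j)\<^sup>2)
     in (c_sum > 0 \<longrightarrow> cvg_prob_pinf M (\<lambda>n w. Tsum C n (eps n w)))
      \<and> (c_sum < 0 \<longrightarrow> cvg_prob_minf M (\<lambda>n w. Tsum C n (eps n w)))
      \<and> (c_lb \<noteq> 0 \<longrightarrow> cvg_prob_pinf M (\<lambda>n w. Tlb C n (eps n w)))
      \<and> (c_sb \<noteq> 0 \<longrightarrow> cvg_prob_pinf M (\<lambda>n w. Tsb C n (eps n w)))"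
proof -
  interpret LS C Xset N s h M eps XM
    unfolding LS_def
    using P0 pos meas_sum meas_lb meas_sb bdd_sum bdd_lb alpha(1) sig Esb_pos s_ge dvd scheme
    by (simp add: XM_def)
  define bb where "bb = N div Nlb C"
  have Nbb: "N = Nlb C * bb" using dvd(1) unfolding bb_def by auto
  have ysum: "(\<Sum>k=1..Nlb C. \<Sum>i=1..bb. x (bb*(k-1)+i) j) = (\<Sum>i\<in>{1..N}. x i j)" for j
    using sum_groups[where a="Nlb C" and b=bb and f="\<lambda>i. x i j"] Nbb by simp
  show ?thesis
    unfolding Let_def bb_def[symmetric]
  proof (intro conjI)
    show "0 < (\<Sum>k=1..Nlb C. \<Sum>i=1..bb. x (bb*(k-1)+i) (Ksb C + 2)) \<longrightarrow> cvg_prob_pinf M (\<lambda>n w. Tsum C n (eps n w))"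
      using res_sum(1)[OF conv] unfolding ysum .
    show "(\<Sum>k=1..Nlb C. \<Sum>i=1..bb. x (bb*(k-1)+i) (Ksb C + 2)) < 0 \<longrightarrow> cvg_prob_minf M (\<lambda>n w. Tsum C n (eps n w))"
      using res_sum(2)[OF conv] unfolding ysum .
    show "(\<Sum>k=1..Nlb C. (\<Sum>i=1..bb. x (bb*(k-1)+i) (Ksb C + 1))\<^sup>2) \<noteq> 0 \<longrightarrow> cvg_prob_pinf M (\<lambda>n w. Tlb C n (eps n w))"
    proof
      assume "(\<Sum>k=1..Nlb C. (\<Sum>i=1..bb. x (bb*(k-1)+i) (Ksb C + 1))\<^sup>2) \<noteq> 0"
      then obtain k0 where k0: "k0 \<in> {1..Nlb C}" "(\<Sum>i=1..bb. x (bb*(k0-1)+i) (Ksb C + 1))\<^sup>2 \<noteq> 0"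
        by (meson sum.neutral)
      have "(\<Sum>i\<in>{bb*(k0-1)<..bb*k0}. x i (Ksb C + 1)) \<noteq> 0"
        using k0 sum_group_shift[where k=k0 and b=bb and f="\<lambda>i. x i (Ksb C + 1)"] by auto
      then show "cvg_prob_pinf M (\<lambda>n w. Tlb C n (eps n w))"
        using res_lb[OF conv, of k0] k0 unfolding bb_def by auto
    qed
    show "(\<Sum>j=0..Ksb C. (\<Sum>k=1..Nlb C. \<Sum>i=1..bb. x (bb*(k-1)+i) j)\<^sup>2) \<noteq> 0 \<longrightarrow> cvg_prob_pinf M (\<lambda>n w. Tsb C n (eps n w))"
    proof
      assume "(\<Sum>j=0..Ksb C. (\<Sum>k=1..Nlb C. \<Sum>i=1..bb. x (bb*(k-1)+i) j)\<^sup>2) \<noteq> 0"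
      then obtain j0 where j0: "j0 \<in> {0..Ksb C}" "(\<Sum>k=1..Nlb C. \<Sum>i=1..bb. x (bb*(k-1)+i) j0)\<^sup>2 \<noteq> 0"
        by (meson sum.neutral)
      then have "(\<Sum>i\<in>{1..N}. x i j0) \<noteq> 0" using ysum by simp
      then show "cvg_prob_pinf M (\<lambda>n w. Tsb C n (eps n w))"
        using res_sb[OF conv, of j0] j0 by auto
    qed
  qed
qed

end
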